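(* Let $r>2$ and fix $i_-$ with $1\le i_-\le r-1$; put $i_+=i_-+1$. Denote the generators of $H^e_{r+1}$ by $\check T_i$ ($i\in\mathbb Z/(r+1)\mathbb Z$) and $\check T_\rho^{\pm1}$. Then the assignment \[ T_i\mapsto\begin{cases}\check T_i & 1\le i<i_-,\\ \check T_{i_-}\check T_{i_+}\check T_{i_-}^{-1} & i=i_-,\\ \check T_{i+1} & i_+\le i\le r,\end{cases}\qquad T_\rho\mapsto \check T_{i_+}^{-1}\check T_\rho,\quad T_\rho^{-1}\mapsto \check T_\rho^{-1}\check T_{i_+} \] (where the generators $T_i$ of $H^e_r$ are indexed by $i\in\{1,\dots,r\}$ representing $\mathbb Z/r\mathbb Z$) extends to an injective $\mathcal A$-algebra homomorphism $\phi^e_v:H^e_r\to H^e_{r+1}$.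
   Context: $\mathcal A=\mathbb Z[v,v^{-1}]$. For $r>2$, the extended affine Hecke algebra $H^e_r$ of type A (Iwahori–Matsumoto presentation) is the associative unital $\mathcal A$-algebra with generators $T_i$ ($i\in\mathbb Z/r\mathbb Z$) and $T_\rho,T_\rho^{-1}$, subject to: $(T_i-v)(T_i+v^{-1})=0$; $T_iT_{i+1}T_i=T_{i+1}T_iT_{i+1}$; $T_iT_j=T_jT_i$ whenever $i-j\not\equiv\pm1\pmod r$; $T_\rho T_i=T_{i+1}T_\rho$; $T_\rho T_\rho^{-1}=T_\rho^{-1}T_\rho=1$ (all indices taken mod $r$). *)

theory Defs
  imports "HOL-Library.Poly_Mapping" "HOL-Algebra.QuotRing" "HOL-Number_Theory.Cong"
begin

text \<open>Laurent polynomials: the group ring of (int,+) over int, i.e. finitely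
  supported functions int => int with convolution product.\<close>
type_synonym laurent = "int \<Rightarrow>\<^sub>0 int"

definition vv :: laurent where "vv = Poly_Mapping.single 1 1"
definition vinv :: laurent where "vinv = Poly_Mapping.single (-1) 1"

datatype 'a word = Word "'a list"

instantiation word :: (type) monoid_add
begin
definition zero_word :: "'a word" where "zero_word = Word []"
fun plus_word :: "'a word \<Rightarrow> 'a word \<Rightarrow> 'a word" where
  "plus_word (Word xs) (Word ys) = Word (xs @ ys)"
instance
proof
  fix a b c :: "'a word"
  show "a + b + c = a + (b + c)" by (cases a; cases b; cases c) auto
  show "0 + a = a" by (cases a) (auto simp: zero_word_def)
  show "a + 0 = a" by (cases a) (auto simp: zero_word_def)
qed
end

datatype gen = T int | Rho | RhoInv

text \<open>Free associative A-algebra: finitely supported functions from words to A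
  with the monoid-algebra (convolution) product.\<close>
type_synonym freealg = "gen word \<Rightarrow>\<^sub>0 laurent"

definition letter :: "gen \<Rightarrow> freealg" where
  "letter x = Poly_Mapping.single (Word [x]) 1"

definition const :: "laurent \<Rightarrow> freealg" where
  "const a = Poly_Mapping.single (Word []) a"

definition FA :: "freealg ring" where
  "FA = \<lparr>carrier = UNIV, monoid.mult = (*), one = 1, zero = 0, add = (+)\<rparr>"

text \<open>Generators T_i are indexed by all integers i, with T_i identified with
  T_(i mod r) (indices are taken mod r).\<close>
definition rels :: "nat \<Rightarrow> freealg set" where
  "rels r =
     {letter (T i) - letter (T (i mod int r)) | i. True}
   \<union> {(letter (T i) - const vv) * (letter (T i) + const vinv) | i. True}
   \<union> {letter (T i) * letter (T (i+1)) * letter (T i)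
        - letter (T (i+1)) * letter (T i) * letter (T (i+1)) | i. True}
   \<union> {letter (T i) * letter (T j) - letter (T j) * letter (T i) | i j.
        \<not> [i - j = 1] (mod int r) \<and> \<not> [i - j = -1] (mod int r)}
   \<union> {letter Rho * letter (T i) - letter (T (i+1)) * letter Rho | i. True}
   \<union> {letter Rho * letter RhoInv - 1, letter RhoInv * letter Rho - 1}"

definition Hecke :: "nat \<Rightarrow> freealg set ring" where
  "Hecke r = FA Quot (genideal FA (rels r))"

definition cls :: "nat \<Rightarrow> freealg \<Rightarrow> freealg set" where
  "cls r x = a_r_coset FA (genideal FA (rels r)) x"

definition gT :: "nat \<Rightarrow> int \<Rightarrow> freealg set" where "gT r i = cls r (letter (T i))"
definition gRho :: "nat \<Rightarrow> freealg set" where "gRho r = cls r (letter Rho)"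
definition gRhoInv :: "nat \<Rightarrow> freealg set" where "gRhoInv r = cls r (letter RhoInv)"
definition scal :: "nat \<Rightarrow> laurent \<Rightarrow> freealg set" where "scal r a = cls r (const a)"

definition hecke_alg_hom :: "nat \<Rightarrow> nat \<Rightarrow> (freealg set \<Rightarrow> freealg set) set" where
  "hecke_alg_hom r s = {\<phi> \<in> ring_hom (Hecke r) (Hecke s). \<forall>a. \<phi> (scal r a) = scal s a}"

end

theory Submission
  imports Defs "HOL-Library.Function_Algebras"
begin

lemma FA_simps [simp]: "carrier FA = UNIV" "monoid.mult FA = (*)" "one FA = 1" "zero FA = 0" "add FA = (+)"
  by (simp_all add: FA_def)

lemma ring_FA: "ring FA"
proof (rule ringI)
  show "abelian_group FA"
    by (rule abelian_groupI) (auto simp: add.assoc add.commute intro: exI[of _ "- x" for x])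
  show "monoid FA" by (rule monoidI) (auto simp: mult.assoc)
qed (auto simp: distrib_left distrib_right)

interpretation FA: ring FA by (rule ring_FA)

lemma FA_ainv [simp]: "a_inv FA x = - x"
  by (rule FA.minus_equality) auto

lemma FA_minus [simp]: "a_minus FA x y = x - y"
  by (simp add: a_minus_def)

lemma ideal_FA_I:
  assumes "0 \<in> J" "\<And>x y. x \<in> J \<Longrightarrow> y \<in> J \<Longrightarrow> x + y \<in> J" "\<And>x. x \<in> J \<Longrightarrow> - x \<in> J"
    "\<And>x a. x \<in> J \<Longrightarrow> a * x \<in> J" "\<And>x a. x \<in> J \<Longrightarrow> x * a \<in> J"
  shows "ideal J FA"
proof (rule idealI[OF ring_FA])
  show "subgroup J (add_monoid FA)"
    by (rule FA.add.subgroupI) (use assms in auto)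
qed (use assms in auto)

definition II :: "nat \<Rightarrow> freealg set" where "II n = genideal FA (rels n)"

lemma ideal_II: "ideal (II n) FA"
  unfolding II_def by (rule FA.genideal_ideal) auto

lemma rels_II: "x \<in> rels n \<Longrightarrow> x \<in> II n"
  unfolding II_def using FA.genideal_self[of "rels n"] by auto

lemma II_min: "ideal J FA \<Longrightarrow> rels n \<subseteq> J \<Longrightarrow> II n \<subseteq> J"
  unfolding II_def by (rule FA.genideal_minimal)

lemma II_0: "0 \<in> II n" using ideal.Icarr ideal_II additive_subgroup.zero_closed
  by (metis FA_simps(4) ideal_def)
lemma II_add: "x \<in> II n \<Longrightarrow> y \<in> II n \<Longrightarrow> x + y \<in> II n"
  using additive_subgroup.a_closed[OF ideal.axioms(1)[OF ideal_II]] by fastforce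
lemma II_neg: "x \<in> II n \<Longrightarrow> - x \<in> II n"
  using additive_subgroup.a_inv_closed[OF ideal.axioms(1)[OF ideal_II]] by fastforce
lemma II_lmult: "x \<in> II n \<Longrightarrow> a * x \<in> II n"
  using ideal.I_l_closed[OF ideal_II] by fastforce
lemma II_rmult: "x \<in> II n \<Longrightarrow> x * a \<in> II n"
  using ideal.I_r_closed[OF ideal_II] by fastforce
lemma II_diff: "x \<in> II n \<Longrightarrow> y \<in> II n \<Longrightarrow> x - y \<in> II n"
  using II_add II_neg by (metis diff_conv_add_uminus)

lemma cls_eq: "cls n x = cls n y \<longleftrightarrow> x - y \<in> II n"
proof -
  interpret I: ideal "II n" FA by (rule ideal_II)
  have "cls n x = cls n y \<longleftrightarrow> y \<in> II n +>\<^bsub>FA\<^esub> x"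
    unfolding cls_def II_def[symmetric]
    by (metis I.a_rcos_self I.a_repr_independence' UNIV_I FA_simps(1))
  also have "\<dots> \<longleftrightarrow> y - x \<in> II n" using I.a_rcos_module_minus[of x y] ring_FA by simp
  also have "\<dots> \<longleftrightarrow> x - y \<in> II n" using II_neg by (metis minus_diff_eq)
  finally show ?thesis .
qed

lemma pm_induct [case_names zero add]:
  fixes P :: "('a \<Rightarrow>\<^sub>0 'b::monoid_add) \<Rightarrow> bool"
  assumes "P 0" "\<And>f a b. P f \<Longrightarrow> P (f + Poly_Mapping.single a b)"
  shows "P p"
proof (induct p rule: update_induct)
  case const then show ?case using assms by simp
next
  case (update f a b)
  have "Poly_Mapping.update a b f = f + Poly_Mapping.single a b"
    by (rule poly_mapping_eqI) (use update(1) in \<open>auto simp: lookup_update lookup_add lookup_single in_keys_iff when_def\<close>)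
  then show ?case using assms update by simp
qed

fun wl :: "(gen \<Rightarrow> 'm \<Rightarrow> 'm) \<Rightarrow> gen list \<Rightarrow> 'm \<Rightarrow> 'm" where
  "wl f [] m = m" | "wl f (g#gs) m = f g (wl f gs m)"

fun wact :: "(gen \<Rightarrow> 'm \<Rightarrow> 'm) \<Rightarrow> gen word \<Rightarrow> 'm \<Rightarrow> 'm" where
  "wact f (Word xs) = wl f xs"

lemma wl_append: "wl f (xs @ ys) m = wl f xs (wl f ys m)"
  by (induct xs) auto

lemma wact_plus: "wact f (u + w) m = wact f u (wact f w m)"
  by (cases u; cases w) (auto simp: wl_append)

lemma wact_zero: "wact f 0 m = m"
  by (simp add: zero_word_def)

locale frep =
  fixes s :: "laurent \<Rightarrow> 'm::ab_group_add \<Rightarrow> 'm" and f :: "gen \<Rightarrow> 'm \<Rightarrow> 'm"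
  assumes f_add: "f g (x + y) = f g x + f g y"
  and s_add: "s a (x + y) = s a x + s a y"
  and s_add2: "s (a + b) x = s a x + s b x"
  and s_mult: "s (a * b) x = s a (s b x)"
  and s_one: "s 1 x = x"
  and s_comm: "s a (f g x) = f g (s a x)"
begin

definition act :: "freealg \<Rightarrow> 'm \<Rightarrow> 'm" where
  "act p m = Sum_any (\<lambda>w. s (Poly_Mapping.lookup p w) (wact f w m))"

lemma f_zero: "f g 0 = 0" using f_add[of g 0 0] by simp
lemma s_zero: "s a 0 = 0" using s_add[of a 0 0] by simp
lemma s_zero2: "s 0 x = 0" using s_add2[of 0 0 x] by simp

lemma wl_add: "wl f xs (x + y) = wl f xs x + wl f xs y"
  by (induct xs) (auto simp: f_add)
lemma wact_add: "wact f w (x + y) = wact f w x + wact f w y"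
  by (cases w) (auto simp: wl_add)
lemma wact_0: "wact f w 0 = 0" using wact_add[of w 0 0] by simp
lemma wl_s: "s a (wl f xs x) = wl f xs (s a x)"
  by (induct xs) (auto simp: s_comm)
lemma wact_s: "s a (wact f w x) = wact f w (s a x)"
  by (cases w) (auto simp: wl_s)

lemma fin: "finite {w. s (Poly_Mapping.lookup p w) (wact f w m) \<noteq> 0}"
  by (rule finite_subset[of _ "Poly_Mapping.keys p"]) (auto simp: in_keys_iff s_zero2)

lemma act_add_p: "act (p + q) m = act p m + act q m"
  unfolding act_def lookup_add s_add2 by (rule Sum_any.distrib[OF fin fin])

lemma act_zero_p [simp]: "act 0 m = 0"
  unfolding act_def by (simp add: s_zero2)

lemma act_single: "act (Poly_Mapping.single w a) m = s a (wact f w m)"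
proof -
  have "act (Poly_Mapping.single w a) m = (\<Sum>w'\<in>{w}. s (Poly_Mapping.lookup (Poly_Mapping.single w a) w') (wact f w' m))"
    unfolding act_def by (rule Sum_any.expand_superset) (auto simp: lookup_single when_def s_zero2)
  then show ?thesis by simp
qed

lemma act_add_m: "act p (x + y) = act p x + act p y"
proof (induct p rule: pm_induct)
  case (add p a b) then show ?case
    by (simp add: act_add_p act_single wact_add s_add algebra_simps)
qed simp

lemma act_zero_m [simp]: "act p 0 = 0" using act_add_m[of p 0 0] by simp

lemma act_s: "act p (s a x) = s a (act p x)"
proof (induct p rule: pm_induct)
  case zero then show ?case by (simp add: s_zero)
next
  case (add p c b) then show ?case
    by (simp add: act_add_p act_single s_add wact_s flip: s_mult) (simp add: mult.commute)
qed

lemma act_wact: "act p (wact f w x) = Sum_any (\<lambda>u. s (Poly_Mapping.lookup p u) (wact f (u + w) x))"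
  unfolding act_def by (simp add: wact_plus)

lemma act_mult: "act (p * q) m = act p (act q m)"
proof (induct q rule: pm_induct)
  case zero then show ?case by simp
next
  case (add q w b)
  have "act (p * Poly_Mapping.single w b) m = act p (act (Poly_Mapping.single w b) m)"
  proof (induct p rule: pm_induct)
    case zero then show ?case by simp
  next
    case (add p u a)
    then show ?case
      by (simp add: distrib_right act_add_p mult_single act_single wact_plus s_mult wact_s)
  qed
  with add show ?case by (simp add: distrib_left act_add_p act_add_m)
qed

lemma act_neg: "act (- p) m = - act p m"
  using act_add_p[of p "-p" m] by (simp add: eq_neg_iff_add_eq_0 add.commute)

lemma act_diff: "act (p - q) m = act p m - act q m"
  using act_add_p[of p "-q" m] by (simp add: act_neg)

lemma act_one: "act 1 m = m"
  using act_single[of 0 1 m] by (simp add: wact_zero s_one)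

lemma act_letter: "act (letter g) m = f g m"
  by (simp add: letter_def act_single s_one)

lemma act_const: "act (const a) m = s a m"
  by (simp add: const_def act_single wact_zero flip: zero_word_def)

end

lemma Hecke_II: "Hecke n = FA Quot (II n)" by (simp add: Hecke_def II_def)
lemma cls_II: "cls n x = II n +>\<^bsub>FA\<^esub> x" by (simp add: cls_def II_def)

lemma cls_hom: "cls n \<in> ring_hom FA (Hecke n)"
proof -
  interpret I: ideal "II n" FA by (rule ideal_II)
  have "(+>\<^bsub>FA\<^esub>) (II n) \<in> ring_hom FA (FA Quot II n)" by (rule I.rcos_ring_hom)
  moreover have "cls n = (+>\<^bsub>FA\<^esub>) (II n)" by (rule ext) (simp add: cls_II)
  ultimately show ?thesis by (simp add: Hecke_II)
qed

lemma ring_Hecke: "ring (Hecke n)"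
proof -
  interpret I: ideal "II n" FA by (rule ideal_II)
  show ?thesis unfolding Hecke_II by (rule I.quotient_is_ring)
qed

lemma cls_carrier [simp]: "cls n x \<in> carrier (Hecke n)"
  using ring_hom_closed[OF cls_hom] by simp

lemma carrier_Hecke: "carrier (Hecke n) = range (cls n)"
proof -
  interpret I: ideal "II n" FA by (rule ideal_II)
  show ?thesis unfolding Hecke_II cls_II
    by (auto simp only: FactRing_def A_RCOSETS_def RCOSETS_def a_r_coset_def partial_object.simps FA_simps image_def)
qed

lemma cls_mult: "cls n (x * y) = cls n x \<otimes>\<^bsub>Hecke n\<^esub> cls n y"
  using ring_hom_mult[OF cls_hom, of x y] by simp
lemma cls_add: "cls n (x + y) = cls n x \<oplus>\<^bsub>Hecke n\<^esub> cls n y"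
  using ring_hom_add[OF cls_hom, of x y] by simp
lemma cls_one: "cls n 1 = \<one>\<^bsub>Hecke n\<^esub>"
  using ring_hom_one[OF cls_hom] by simp
lemma cls_zero: "cls n 0 = \<zero>\<^bsub>Hecke n\<^esub>"
  using ring_hom_zero[OF cls_hom ring_FA ring_Hecke] by simp
lemma cls_neg: "cls n (- x) = \<ominus>\<^bsub>Hecke n\<^esub> cls n x"
proof -
  interpret H: ring "Hecke n" by (rule ring_Hecke)
  have "cls n (- x) \<oplus>\<^bsub>Hecke n\<^esub> cls n x = cls n (- x + x)"
    by (rule cls_add[symmetric])
  also have "\<dots> = \<zero>\<^bsub>Hecke n\<^esub>" using cls_zero[of n] by (metis add.left_inverse)
  finally show ?thesis using H.minus_equality cls_carrier by metis
qed
lemma cls_diff: "cls n (x - y) = cls n x \<ominus>\<^bsub>Hecke n\<^esub> cls n y"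
  by (simp only: diff_conv_add_uminus cls_add cls_neg a_minus_def)

lemma cls_eq0: "cls n x = \<zero>\<^bsub>Hecke n\<^esub> \<longleftrightarrow> x \<in> II n"
  using cls_eq[of n x 0] by (simp only: cls_zero diff_zero)

lemma const_central: "const a * x = x * const a"
proof (induct x rule: pm_induct)
  case zero then show ?case by simp
next
  case (add f w b)
  then show ?case by (simp add: distrib_left distrib_right const_def mult_single mult.commute flip: zero_word_def)
qed

lemma const_mult: "const (a * b) = const a * const b"
  by (simp add: const_def mult_single)
lemma const_add: "const (a + b) = const a + const b"
  by (simp add: const_def single_add)
lemma const_diff: "const (a - b) = const a - const b"
  by (simp add: const_def single_diff)
lemma const_one: "const 1 = 1" by (simp add: const_def zero_word_def[symmetric])
lemma vv_vinv: "vv * vinv = 1"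
  by (simp add: vv_def vinv_def mult_single)

locale hk = ring R for R (structure) +
  fixes N :: nat and t :: "int \<Rightarrow> 'a" and rh rhi cc :: 'a
  assumes N3: "N > 2"
  and tC [simp]: "t i \<in> carrier R" and rhC [simp]: "rh \<in> carrier R"
  and rhiC [simp]: "rhi \<in> carrier R" and ccC [simp]: "cc \<in> carrier R"
  and t_cong: "i mod int N = j mod int N \<Longrightarrow> t i = t j"
  and quad: "t i \<otimes> t i = cc \<otimes> t i \<oplus> \<one>"
  and braid: "t i \<otimes> t (i + 1) \<otimes> t i = t (i + 1) \<otimes> t i \<otimes> t (i + 1)"
  and comm: "\<not> [i - j = 1] (mod int N) \<Longrightarrow> \<not> [i - j = - 1] (mod int N) \<Longrightarrow> t i \<otimes> t j = t j \<otimes> t i"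
  and rho: "rh \<otimes> t i = t (i + 1) \<otimes> rh"
  and rr1: "rh \<otimes> rhi = \<one>" and rr2: "rhi \<otimes> rh = \<one>"
  and ccc: "x \<in> carrier R \<Longrightarrow> cc \<otimes> x = x \<otimes> cc"

lemma hk_Hecke: "n > 2 \<Longrightarrow> hk (Hecke n) n (gT n) (gRho n) (gRhoInv n) (scal n (vv - vinv))"
proof -
  assume n: "n > 2"
  interpret H: ring "Hecke n" by (rule ring_Hecke)
  have rel: "cls n x = cls n y" if "x - y \<in> rels n" for x y
    using rels_II[OF that] cls_eq by blast
  show ?thesis
  proof (unfold_locales)
    fix i j :: int assume "i mod int n = j mod int n"
    have g: "gT n k = gT n (k mod int n)" for k unfolding gT_def by (rule rel) (auto simp: rels_def)
    show "gT n i = gT n j" using g[of i] g[of j] \<open>i mod int n = j mod int n\<close> by simp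
  next
    fix i :: int
    let ?t = "letter (T i)"
    have c1: "?t * const vinv = const vinv * ?t" by (rule const_central[symmetric])
    have c2: "const vv * const vinv = 1" by (simp only: const_mult[symmetric] vv_vinv const_one)
    have e: "(?t - const vv) * (?t + const vinv) = ?t * ?t - (const (vv - vinv) * ?t + 1)"
      by (simp only: ring_distribs const_diff c1 c2 left_diff_distrib) (simp add: algebra_simps)
    have "(?t - const vv) * (?t + const vinv) \<in> rels n" by (auto simp: rels_def)
    then have "cls n (?t * ?t) = cls n (const (vv - vinv) * ?t + 1)" using rels_II cls_eq e by metis
    then show "gT n i \<otimes>\<^bsub>Hecke n\<^esub> gT n i = scal n (vv - vinv) \<otimes>\<^bsub>Hecke n\<^esub> gT n i \<oplus>\<^bsub>Hecke n\<^esub> \<one>\<^bsub>Hecke n\<^esub>"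
      by (simp add: gT_def scal_def cls_mult cls_add cls_one)
  next
    fix i :: int
    have "cls n (letter (T i) * letter (T (i+1)) * letter (T i)) = cls n (letter (T (i+1)) * letter (T i) * letter (T (i+1)))"
      by (rule rel) (auto simp: rels_def)
    then show "gT n i \<otimes>\<^bsub>Hecke n\<^esub> gT n (i + 1) \<otimes>\<^bsub>Hecke n\<^esub> gT n i = gT n (i + 1) \<otimes>\<^bsub>Hecke n\<^esub> gT n i \<otimes>\<^bsub>Hecke n\<^esub> gT n (i + 1)"
      by (simp add: gT_def cls_mult)
  next
    fix i j :: int assume "\<not> [i - j = 1] (mod int n)" "\<not> [i - j = - 1] (mod int n)"
    then have "cls n (letter (T i) * letter (T j)) = cls n (letter (T j) * letter (T i))"
      by (intro rel) (auto simp: rels_def)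
    then show "gT n i \<otimes>\<^bsub>Hecke n\<^esub> gT n j = gT n j \<otimes>\<^bsub>Hecke n\<^esub> gT n i"
      by (simp add: gT_def cls_mult)
  next
    fix i :: int
    have "cls n (letter Rho * letter (T i)) = cls n (letter (T (i+1)) * letter Rho)"
      by (rule rel) (auto simp: rels_def)
    then show "gRho n \<otimes>\<^bsub>Hecke n\<^esub> gT n i = gT n (i + 1) \<otimes>\<^bsub>Hecke n\<^esub> gRho n"
      by (simp add: gT_def gRho_def cls_mult)
  next
    have "cls n (letter Rho * letter RhoInv) = cls n 1" by (rule rel) (auto simp: rels_def)
    then show "gRho n \<otimes>\<^bsub>Hecke n\<^esub> gRhoInv n = \<one>\<^bsub>Hecke n\<^esub>"
      by (simp add: gRhoInv_def gRho_def cls_mult cls_one)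
  next
    have "cls n (letter RhoInv * letter Rho) = cls n 1" by (rule rel) (auto simp: rels_def)
    then show "gRhoInv n \<otimes>\<^bsub>Hecke n\<^esub> gRho n = \<one>\<^bsub>Hecke n\<^esub>"
      by (simp add: gRhoInv_def gRho_def cls_mult cls_one)
  next
    fix x assume "x \<in> carrier (Hecke n)"
    then obtain y where "x = cls n y" by (auto simp: carrier_Hecke)
    then show "scal n (vv - vinv) \<otimes>\<^bsub>Hecke n\<^esub> x = x \<otimes>\<^bsub>Hecke n\<^esub> scal n (vv - vinv)"
      by (simp add: scal_def const_central flip: cls_mult)
  qed (auto simp: n gT_def gRho_def gRhoInv_def scal_def)
qed

context hk begin

definition ti :: "int \<Rightarrow> 'a" where "ti i = t i \<ominus> cc"

lemma tiC [simp]: "ti i \<in> carrier R" by (simp add: ti_def)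

lemma tti: "t i \<otimes> ti i = \<one>"
proof -
  have "t i \<otimes> ti i = t i \<otimes> t i \<oplus> \<ominus> (cc \<otimes> t i)" by (simp add: ti_def a_minus_def r_distr r_minus ccc)
  also have "\<dots> = \<one>" by (simp add: quad a_ac r_neg2 r_neg)
  finally show ?thesis .
qed

lemma tit: "ti i \<otimes> t i = \<one>"
proof -
  have "ti i \<otimes> t i = t i \<otimes> t i \<oplus> \<ominus> (cc \<otimes> t i)" by (simp add: ti_def a_minus_def l_distr l_minus)
  also have "\<dots> = \<one>" by (simp add: quad a_ac r_neg2 r_neg)
  finally show ?thesis .
qed

lemma assoc_z: "x \<otimes> y = w \<Longrightarrow> x \<in> carrier R \<Longrightarrow> y \<in> carrier R \<Longrightarrow> z \<in> carrier R \<Longrightarrow> x \<otimes> (y \<otimes> z) = w \<otimes> z"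
  by (simp flip: m_assoc)

lemma tti': "z \<in> carrier R \<Longrightarrow> t i \<otimes> (ti i \<otimes> z) = z" by (simp add: assoc_z[OF tti])
lemma tit': "z \<in> carrier R \<Longrightarrow> ti i \<otimes> (t i \<otimes> z) = z" by (simp add: assoc_z[OF tit])
lemma rr1': "z \<in> carrier R \<Longrightarrow> rh \<otimes> (rhi \<otimes> z) = z" by (simp add: assoc_z[OF rr1])
lemma rr2': "z \<in> carrier R \<Longrightarrow> rhi \<otimes> (rh \<otimes> z) = z" by (simp add: assoc_z[OF rr2])
lemma quad': "z \<in> carrier R \<Longrightarrow> t i \<otimes> (t i \<otimes> z) = cc \<otimes> (t i \<otimes> z) \<oplus> z"
  by (simp add: assoc_z[OF quad] l_distr m_assoc)
lemma ccl: "x \<in> carrier R \<Longrightarrow> z \<in> carrier R \<Longrightarrow> x \<otimes> (cc \<otimes> z) = cc \<otimes> (x \<otimes> z)"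
  by (metis ccC ccc m_assoc)
lemma ccr: "x \<in> carrier R \<Longrightarrow> x \<otimes> cc = cc \<otimes> x" by (simp add: ccc)

lemma braid': "z \<in> carrier R \<Longrightarrow> t i \<otimes> (t (i + 1) \<otimes> (t i \<otimes> z)) = t (i + 1) \<otimes> (t i \<otimes> (t (i + 1) \<otimes> z))"
  using assoc_z[OF braid[of i]] by (simp add: m_assoc)
lemma rho': "z \<in> carrier R \<Longrightarrow> rh \<otimes> (t i \<otimes> z) = t (i + 1) \<otimes> (rh \<otimes> z)"
  by (simp add: assoc_z[OF rho] m_assoc)

lemma rho_ti: "rh \<otimes> ti i = ti (i + 1) \<otimes> rh"
  by (simp add: ti_def a_minus_def r_distr l_distr rho r_minus l_minus ccc)
lemma rho_ti': "z \<in> carrier R \<Longrightarrow> rh \<otimes> (ti i \<otimes> z) = ti (i + 1) \<otimes> (rh \<otimes> z)"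
  by (simp add: assoc_z[OF rho_ti] m_assoc)

lemma mod_adj: "2 \<le> d \<and> d \<le> int N - 2 \<or> 2 \<le> - d \<and> - d \<le> int N - 2 \<Longrightarrow>
   \<not> [d = 1] (mod int N) \<and> \<not> [d = - 1] (mod int N)"
proof -
  assume h: "2 \<le> d \<and> d \<le> int N - 2 \<or> 2 \<le> - d \<and> - d \<le> int N - 2"
  have nd: "\<not> int N dvd x" if "0 < x \<and> x < int N \<or> 0 < - x \<and> - x < int N" for x
    using that zdvd_not_zless[of x "int N"] zdvd_not_zless[of "-x" "int N"] by auto
  have "\<not> (int N dvd d - 1)" "\<not> (int N dvd d + 1)"
    using nd[of "d - 1"] nd[of "d + 1"] h by auto
  then show ?thesis by (simp add: cong_iff_dvd_diff cong_sym_eq)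
qed

lemma comm_range: "2 \<le> x - y \<and> x - y \<le> int N - 2 \<or> 2 \<le> y - x \<and> y - x \<le> int N - 2 \<Longrightarrow> t x \<otimes> t y = t y \<otimes> t x"
  using mod_adj[of "x - y"] comm by auto

lemma comm_range': "2 \<le> x - y \<and> x - y \<le> int N - 2 \<or> 2 \<le> y - x \<and> y - x \<le> int N - 2 \<Longrightarrow> z \<in> carrier R \<Longrightarrow> t x \<otimes> (t y \<otimes> z) = t y \<otimes> (t x \<otimes> z)"
proof -
  assume h: "2 \<le> x - y \<and> x - y \<le> int N - 2 \<or> 2 \<le> y - x \<and> y - x \<le> int N - 2" and z: "z \<in> carrier R"
  have e: "t x \<otimes> t y = t y \<otimes> t x" using comm_range[OF h] .
  show ?thesis using e z by (simp flip: m_assoc)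
qed

lemma comm_ti: "t x \<otimes> t y = t y \<otimes> t x \<Longrightarrow> ti x \<otimes> t y = t y \<otimes> ti x"
  by (simp add: ti_def a_minus_def r_distr l_distr r_minus l_minus ccc)
lemma comm_ti2: "t x \<otimes> t y = t y \<otimes> t x \<Longrightarrow> t x \<otimes> ti y = ti y \<otimes> t x"
  by (simp add: ti_def a_minus_def r_distr l_distr r_minus l_minus ccc)

end

locale phiC = hk +
  fixes r :: nat and im :: int
  assumes Nr: "N = r + 1" and r2: "r > 2" and im1: "1 \<le> im" and imr: "im \<le> int r - 1"
begin

definition X :: 'a where "X = t im \<otimes> t (im + 1) \<otimes> ti im"
definition phiT :: "int \<Rightarrow> 'a" where
  "phiT i = (if (i - im) mod int r = 0 then X else t ((i - im) mod int r + im + 1))"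
definition phiR :: 'a where "phiR = ti (im + 1) \<otimes> rh"
definition phiRi :: 'a where "phiRi = rhi \<otimes> t (im + 1)"

lemma XC [simp]: "X \<in> carrier R" by (simp add: X_def)
lemma phiTC [simp]: "phiT i \<in> carrier R" by (simp add: phiT_def)

lemma X_alt: "X = ti (im + 1) \<otimes> t im \<otimes> t (im + 1)"
proof -
  have br: "t im \<otimes> (t (im + 1) \<otimes> (t im \<otimes> z)) = t (im + 1) \<otimes> (t im \<otimes> (t (im + 1) \<otimes> z))"
    if "z \<in> carrier R" for z using braid'[OF that, of im] by simp
  have "X = ti (im + 1) \<otimes> (t (im + 1) \<otimes> X)" by (simp add: tit')
  also have "\<dots> = ti (im + 1) \<otimes> (t (im + 1) \<otimes> (t im \<otimes> (t (im + 1) \<otimes> ti im)))" by (simp add: X_def m_assoc)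
  also have "\<dots> = ti (im + 1) \<otimes> (t im \<otimes> (t (im + 1) \<otimes> (t im \<otimes> ti im)))" by (simp add: br)
  also have "\<dots> = ti (im + 1) \<otimes> t im \<otimes> t (im + 1)" by (simp add: tti m_assoc)
  finally show ?thesis .
qed

lemma C2: "phiT i \<otimes> phiT i = cc \<otimes> phiT i \<oplus> \<one>"
proof (cases "(i - im) mod int r = 0")
  case True
  then show ?thesis
    by (simp add: phiT_def X_def m_assoc tit' quad' r_distr ccl tti)
next
  case False
  then show ?thesis by (simp add: phiT_def quad)
qed

lemma N4: "int N \<ge> 4" using Nr r2 by simp

lemma mod_succ: "(i + 1 - im) mod int r = (if (i - im) mod int r = int r - 1 then 0 else (i - im) mod int r + 1)"
proof -
  have "(i + 1 - im) mod int r = ((i - im) + 1) mod int r" by (simp add: algebra_simps)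
  also have "\<dots> = ((i - im) mod int r + 1) mod int r" by (simp add: mod_add_left_eq)
  finally have "(i + 1 - im) mod int r = ((i - im) mod int r + 1) mod int r" .
  moreover have "0 \<le> (i - im) mod int r" "(i - im) mod int r < int r" using r2 by auto
  ultimately show ?thesis by (auto simp: mod_pos_pos_trivial)
qed

lemma C3: "phiT i \<otimes> phiT (i + 1) \<otimes> phiT i = phiT (i + 1) \<otimes> phiT i \<otimes> phiT (i + 1)"
proof -
  define u where "u = (i - im) mod int r"
  have u0: "0 \<le> u" "u < int r" using r2 by (auto simp: u_def)
  have su: "(i + 1 - im) mod int r = (if u = int r - 1 then 0 else u + 1)" using mod_succ u_def by simp
  consider "u = 0" | "u = int r - 1" | "1 \<le> u \<and> u \<le> int r - 2" using u0 r2 by linarith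
  then show ?thesis
  proof cases
    case 1
    let ?a = "t im" and ?b = "t (im + 1)" and ?d = "t (im + 2)"
    have e1: "phiT i = X" "phiT (i + 1) = ?d" using 1 su r2 by (simp_all add: phiT_def u_def[symmetric] add_ac)
    have ad: "?d \<otimes> ?a = ?a \<otimes> ?d" by (rule comm_range) (use N4 in simp)
    have ad': "?d \<otimes> (?a \<otimes> z) = ?a \<otimes> (?d \<otimes> z)" if "z \<in> carrier R" for z
      using ad that by (simp flip: m_assoc)
    have aid: "ti im \<otimes> ?d = ?d \<otimes> ti im" by (rule comm_ti) (simp add: ad)
    have aid': "ti im \<otimes> (?d \<otimes> z) = ?d \<otimes> (ti im \<otimes> z)" if "z \<in> carrier R" for z
      using aid that by (simp flip: m_assoc)
    have bdb: "?b \<otimes> (?d \<otimes> (?b \<otimes> z)) = ?d \<otimes> (?b \<otimes> (?d \<otimes> z))" if "z \<in> carrier R" for z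
      using braid'[OF that, of "im + 1"] by (simp add: add.assoc)
    show ?thesis unfolding e1 X_def
      by (simp add: m_assoc aid' aid tit' bdb ad')
  next
    case 2
    let ?a = "t im" and ?b = "t (im + 1)" and ?c = "t (im - 1)"
    have tc: "t (int r - 1 + im + 1) = ?c"
    proof (rule t_cong)
      have "int r - 1 + im + 1 = (im - 1) + int N" using Nr by simp
      then show "(int r - 1 + im + 1) mod int N = (im - 1) mod int N" by (simp only: mod_add_self2)
    qed
    have e1: "phiT i = ?c" "phiT (i + 1) = X" using 2 su r2 tc by (simp_all add: phiT_def u_def[symmetric])
    have bc: "?b \<otimes> ?c = ?c \<otimes> ?b" by (rule comm_range) (use N4 in simp)
    have bc': "?b \<otimes> (?c \<otimes> z) = ?c \<otimes> (?b \<otimes> z)" if "z \<in> carrier R" for z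
      using bc that by (simp flip: m_assoc)
    have cbi: "?c \<otimes> ti (im + 1) = ti (im + 1) \<otimes> ?c" by (rule comm_ti2) (simp add: bc)
    have cbi': "?c \<otimes> (ti (im + 1) \<otimes> z) = ti (im + 1) \<otimes> (?c \<otimes> z)" if "z \<in> carrier R" for z
      using cbi that by (simp flip: m_assoc)
    have cac: "?c \<otimes> (?a \<otimes> (?c \<otimes> z)) = ?a \<otimes> (?c \<otimes> (?a \<otimes> z))" if "z \<in> carrier R" for z
      using braid'[OF that, of "im - 1"] by simp
    show ?thesis unfolding e1 X_alt
      by (simp add: m_assoc cbi' bc bc' cac tti')
  next
    case 3
    have e1: "phiT i = t (u + im + 1)" "phiT (i + 1) = t (u + im + 1 + 1)" using 3 su r2
      by (simp_all add: phiT_def u_def[symmetric] add_ac)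
    show ?thesis unfolding e1 by (rule braid)
  qed
qed

end

context phiC begin

lemma X_comm: "2 \<le> w \<Longrightarrow> w \<le> int r - 2 \<Longrightarrow> X \<otimes> t (w + im + 1) = t (w + im + 1) \<otimes> X"
proof -
  assume w: "2 \<le> w" "w \<le> int r - 2"
  let ?e = "t (w + im + 1)"
  have ea: "t im \<otimes> ?e = ?e \<otimes> t im" by (rule comm_range) (use w Nr in simp)
  have eb: "t (im + 1) \<otimes> ?e = ?e \<otimes> t (im + 1)" by (rule comm_range) (use w Nr in simp)
  have eai: "ti im \<otimes> ?e = ?e \<otimes> ti im" by (rule comm_ti) (simp add: ea)
  have "X \<otimes> ?e = t im \<otimes> t (im + 1) \<otimes> (ti im \<otimes> ?e)" by (simp add: X_def m_assoc)
  also have "\<dots> = t im \<otimes> (t (im + 1) \<otimes> ?e) \<otimes> ti im" by (simp add: eai m_assoc)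
  also have "\<dots> = (t im \<otimes> ?e) \<otimes> t (im + 1) \<otimes> ti im" by (simp add: eb m_assoc)
  also have "\<dots> = ?e \<otimes> X" by (simp add: ea X_def m_assoc)
  finally show ?thesis .
qed

lemma C4_0: "(i - im) mod int r = 0 \<Longrightarrow> \<not> [i - j = 1] (mod int r) \<Longrightarrow> \<not> [i - j = - 1] (mod int r) \<Longrightarrow>
   phiT i \<otimes> phiT j = phiT j \<otimes> phiT i"
proof -
  assume u1: "(i - im) mod int r = 0" and h1: "\<not> [i - j = 1] (mod int r)" and h2: "\<not> [i - j = - 1] (mod int r)"
  define u2 where "u2 = (j - im) mod int r"
  have u20: "0 \<le> u2" "u2 < int r" using r2 by (auto simp: u2_def)
  have md: "(i - j) mod int r = (0 - u2) mod int r"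
    by (metis u1 u2_def mod_diff_eq diff_diff_eq2 diff_diff_cancel diff_add_cancel)
  show ?thesis
  proof (cases "u2 = 0")
    case True then show ?thesis using u1 by (simp add: phiT_def u2_def)
  next
    case False
    have "u2 \<noteq> 1"
    proof
      assume "u2 = 1" then have "[i - j = - 1] (mod int r)" by (simp add: cong_def md)
      with h2 show False ..
    qed
    moreover have "u2 \<noteq> int r - 1"
    proof
      assume "u2 = int r - 1"
      then have "(i - j) mod int r = (1 - int r) mod int r" by (simp add: md)
      also have "\<dots> = 1 mod int r" by (metis add.commute diff_add_cancel mod_add_self2)
      finally have "[i - j = 1] (mod int r)" by (simp add: cong_def)
      with h1 show False ..
    qed
    ultimately have w: "2 \<le> u2" "u2 \<le> int r - 2" using False u20 by auto
    have e: "phiT i = X" "phiT j = t (u2 + im + 1)" using u1 False by (simp_all add: phiT_def u2_def)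
    show ?thesis unfolding e by (rule X_comm[OF w])
  qed
qed

lemma C4: "\<not> [i - j = 1] (mod int r) \<Longrightarrow> \<not> [i - j = - 1] (mod int r) \<Longrightarrow>
   phiT i \<otimes> phiT j = phiT j \<otimes> phiT i"
proof -
  assume h1: "\<not> [i - j = 1] (mod int r)" and h2: "\<not> [i - j = - 1] (mod int r)"
  have h1': "\<not> [j - i = - 1] (mod int r)" using h1
    by (metis cong_minus_minus_iff minus_diff_eq minus_minus)
  have h2': "\<not> [j - i = 1] (mod int r)" using h2
    by (metis cong_minus_minus_iff minus_diff_eq)
  define u1 where "u1 = (i - im) mod int r"
  define u2 where "u2 = (j - im) mod int r"
  show ?thesis
  proof (cases "u1 = 0 \<or> u2 = 0")
    case True
    then show ?thesis using C4_0[OF _ h1 h2] C4_0[OF _ h2' h1'] u1_def u2_def by metis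
  next
    case False
    have u0: "0 \<le> u1" "u1 < int r" "0 \<le> u2" "u2 < int r" using r2 by (auto simp: u1_def u2_def)
    have md: "(i - j) mod int r = (u1 - u2) mod int r"
      unfolding u1_def u2_def by (simp add: mod_diff_eq)
    show ?thesis
    proof (cases "u1 = u2")
      case True then show ?thesis by (simp add: phiT_def u1_def[symmetric] u2_def[symmetric])
    next
      case ne: False
      have "u1 - u2 \<noteq> 1" using h1 md by (auto simp: cong_def)
      moreover have "u1 - u2 \<noteq> - 1" using h2 md by (auto simp: cong_def)
      ultimately have rng: "2 \<le> (u1 + im + 1) - (u2 + im + 1) \<and> (u1 + im + 1) - (u2 + im + 1) \<le> int N - 2 \<or>
          2 \<le> (u2 + im + 1) - (u1 + im + 1) \<and> (u2 + im + 1) - (u1 + im + 1) \<le> int N - 2"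
        using ne u0 False Nr by auto
      have e: "phiT i = t (u1 + im + 1)" "phiT j = t (u2 + im + 1)" using False
        by (simp_all add: phiT_def u1_def u2_def)
      show ?thesis unfolding e by (rule comm_range[OF rng])
    qed
  qed
qed

lemma C5: "phiR \<otimes> phiT i = phiT (i + 1) \<otimes> phiR"
proof -
  define u where "u = (i - im) mod int r"
  have u0: "0 \<le> u" "u < int r" using r2 by (auto simp: u_def)
  have su: "(i + 1 - im) mod int r = (if u = int r - 1 then 0 else u + 1)" using mod_succ u_def by simp
  consider "u = 0" | "u = int r - 1" | "1 \<le> u \<and> u \<le> int r - 2" using u0 r2 by linarith
  then show ?thesis
  proof cases
    case 1
    have e1: "phiT i = X" "phiT (i + 1) = t (im + 2)" using 1 su r2 by (simp_all add: phiT_def u_def[symmetric] add_ac)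
    have r1: "rh \<otimes> (t im \<otimes> z) = t (im + 1) \<otimes> (rh \<otimes> z)" if "z \<in> carrier R" for z using rho'[OF that] .
    have r2': "rh \<otimes> (t (im + 1) \<otimes> z) = t (im + 2) \<otimes> (rh \<otimes> z)" if "z \<in> carrier R" for z
      using rho'[OF that, of "im + 1"] by (simp add: add.assoc)
    have r3: "rh \<otimes> ti im = ti (im + 1) \<otimes> rh" by (rule rho_ti)
    show ?thesis unfolding e1 X_def phiR_def
      by (simp add: m_assoc r1 r2' r3 tit')
  next
    case 2
    have tc: "t (int r - 1 + im + 1) = t (im - 1)"
    proof (rule t_cong)
      have "int r - 1 + im + 1 = (im - 1) + int N" using Nr by simp
      then show "(int r - 1 + im + 1) mod int N = (im - 1) mod int N" by (simp only: mod_add_self2)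
    qed
    have e1: "phiT i = t (im - 1)" "phiT (i + 1) = X" using 2 su r2 tc by (simp_all add: phiT_def u_def[symmetric])
    have r1: "rh \<otimes> t (im - 1) = t im \<otimes> rh" using rho[of "im - 1"] by simp
    show ?thesis unfolding e1 X_alt phiR_def
      by (simp add: m_assoc r1 tti')
  next
    case 3
    have e1: "phiT i = t (u + im + 1)" "phiT (i + 1) = t (u + im + 2)" using 3 su r2
      by (simp_all add: phiT_def u_def[symmetric] add_ac)
    have r1: "rh \<otimes> t (u + im + 1) = t (u + im + 2) \<otimes> rh" using rho[of "u + im + 1"] by (simp add: add.assoc)
    have cb: "t (im + 1) \<otimes> t (u + im + 2) = t (u + im + 2) \<otimes> t (im + 1)"
      by (rule comm_range) (use 3 Nr in simp)
    have cbi: "ti (im + 1) \<otimes> t (u + im + 2) = t (u + im + 2) \<otimes> ti (im + 1)" by (rule comm_ti[OF cb])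
    have "phiR \<otimes> phiT i = ti (im + 1) \<otimes> (rh \<otimes> t (u + im + 1))" by (simp add: e1 phiR_def m_assoc)
    also have "\<dots> = (ti (im + 1) \<otimes> t (u + im + 2)) \<otimes> rh" by (simp add: r1 m_assoc)
    also have "\<dots> = phiT (i + 1) \<otimes> phiR" by (simp add: cbi e1 phiR_def m_assoc)
    finally show ?thesis .
  qed
qed

lemma C6: "phiR \<otimes> phiRi = \<one>" "phiRi \<otimes> phiR = \<one>"
  by (simp_all add: phiR_def phiRi_def m_assoc rr1' rr2' tit tti tti' rr1 rr2)

end

lemma quad_expand: "(x - const vv) * (x + const vinv) = x * x - (const (vv - vinv) * x + 1)"
proof -
  have c1: "x * const vinv = const vinv * x" by (rule const_central[symmetric])
  have c2: "const vv * const vinv = 1" by (simp only: const_mult[symmetric] vv_vinv const_one)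
  show ?thesis
    by (simp only: ring_distribs const_diff c1 c2 left_diff_distrib) (simp add: algebra_simps)
qed

lemma frep_F: "frep (\<lambda>a x. const a * x) (\<lambda>g x. (F g :: freealg) * x)"
  by unfold_locales (simp_all add: distrib_left distrib_right const_add const_mult const_one mult.assoc,
      metis const_central mult.assoc)

definition fhom :: "(gen \<Rightarrow> freealg) \<Rightarrow> freealg \<Rightarrow> freealg" where
  "fhom F p = frep.act (\<lambda>a x. const a * x) (\<lambda>g x. F g * x) p 1"

lemma wl_F: "wl (\<lambda>g x. (F g :: freealg) * x) xs y = wl (\<lambda>g x. F g * x) xs 1 * y"
  by (induct xs) (auto simp: mult.assoc)

lemma act_F: "frep.act (\<lambda>a x. const a * x) (\<lambda>g x. F g * x) p y = fhom F p * y"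
proof -
  interpret fr: frep "\<lambda>a x. const a * x" "\<lambda>g x. F g * x" by (rule frep_F)
  show ?thesis unfolding fhom_def
  proof (induct p rule: pm_induct)
    case zero then show ?case by simp
  next
    case (add f w b)
    have "wact (\<lambda>g x. F g * x) w y = wact (\<lambda>g x. F g * x) w 1 * y"
      by (cases w) (simp add: wl_F[of F _ y])
    then show ?case using add by (simp only: fr.act_add_p fr.act_single distrib_right mult.assoc)
  qed
qed

lemma hom_mult: "fhom F (p * q) = fhom F p * fhom F q"
proof -
  interpret fr: frep "\<lambda>a x. const a * x" "\<lambda>g x. F g * x" by (rule frep_F)
  show ?thesis unfolding fhom_def fr.act_mult by (simp add: act_F)
qed

lemma hom_add: "fhom F (p + q) = fhom F p + fhom F q"
proof -
  interpret fr: frep "\<lambda>a x. const a * x" "\<lambda>g x. F g * x" by (rule frep_F)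
  show ?thesis unfolding fhom_def fr.act_add_p ..
qed

lemma hom_diff: "fhom F (p - q) = fhom F p - fhom F q"
proof -
  interpret fr: frep "\<lambda>a x. const a * x" "\<lambda>g x. F g * x" by (rule frep_F)
  show ?thesis unfolding fhom_def fr.act_diff ..
qed

lemma hom_neg: "fhom F (- p) = - fhom F p"
proof -
  interpret fr: frep "\<lambda>a x. const a * x" "\<lambda>g x. F g * x" by (rule frep_F)
  show ?thesis unfolding fhom_def fr.act_neg ..
qed

lemma hom_one: "fhom F 1 = 1"
proof -
  interpret fr: frep "\<lambda>a x. const a * x" "\<lambda>g x. F g * x" by (rule frep_F)
  show ?thesis unfolding fhom_def fr.act_one ..
qed

lemma hom_letter: "fhom F (letter g) = F g"
proof -
  interpret fr: frep "\<lambda>a x. const a * x" "\<lambda>g x. F g * x" by (rule frep_F)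
  show ?thesis unfolding fhom_def fr.act_letter by simp
qed

lemma hom_const: "fhom F (const a) = const a"
proof -
  interpret fr: frep "\<lambda>a x. const a * x" "\<lambda>g x. F g * x" by (rule frep_F)
  show ?thesis unfolding fhom_def fr.act_const by simp
qed

definition cc0 :: freealg where "cc0 = const (vv - vinv)"
definition tf :: "int \<Rightarrow> freealg" where "tf i = letter (T i)"
definition tinvf :: "int \<Rightarrow> freealg" where "tinvf i = tf i - cc0"

definition Fimg :: "nat \<Rightarrow> int \<Rightarrow> gen \<Rightarrow> freealg" where
  "Fimg r im g = (case g of
      T i \<Rightarrow> (if (i - im) mod int r = 0 then tf im * tf (im + 1) * tinvf im else tf ((i - im) mod int r + im + 1))
    | Rho \<Rightarrow> tinvf (im + 1) * letter Rho
    | RhoInv \<Rightarrow> letter RhoInv * tf (im + 1))"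

lemma phiC_Hecke:
  assumes "r > 2" "1 \<le> im" "im \<le> int r - 1" "N = r + 1"
  shows "phiC (Hecke N) N (gT N) (gRho N) (gRhoInv N) (scal N (vv - vinv)) r im"
proof -
  interpret hk "Hecke N" "N" "gT N" "gRho N" "gRhoInv N" "scal N (vv - vinv)"
    by (rule hk_Hecke) (use assms in simp)
  show ?thesis by unfold_locales (use assms in auto)
qed

lemma II_of_cls: "cls n x = cls n y \<Longrightarrow> x - y \<in> II n" using cls_eq by blast

lemma Phi_II:
  assumes r: "r > 2" "1 \<le> im" "im \<le> int r - 1" "N = r + 1"
  shows "fhom (Fimg r im) ` II r \<subseteq> II N"
proof -
  let ?N = "N" and ?F = "Fimg r im"
  interpret P: phiC "Hecke N" "N" "gT N" "gRho N" "gRhoInv N" "scal N (vv - vinv)" r im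
    by (rule phiC_Hecke[OF r])
  have ctf: "cls ?N (tf i) = gT ?N i" for i by (simp add: tf_def gT_def)
  have ctinv: "cls ?N (tinvf i) = P.ti i" for i
    unfolding tinvf_def cc0_def P.ti_def unfolding scal_def by (simp add: cls_diff ctf)
  have cT: "cls ?N (?F (T i)) = P.phiT i" for i
    by (simp add: Fimg_def P.phiT_def P.X_def cls_mult ctf ctinv)
  have cR: "cls ?N (?F Rho) = P.phiR" unfolding P.phiR_def by (simp add: Fimg_def cls_mult ctinv gRho_def)
  have cRi: "cls ?N (?F RhoInv) = P.phiRi" unfolding P.phiRi_def by (simp add: Fimg_def cls_mult ctf gRhoInv_def)
  define J where "J = {p. fhom ?F p \<in> II ?N}"
  have idJ: "ideal J FA"
    by (rule ideal_FA_I) (auto simp: J_def hom_add hom_neg hom_mult II_add II_neg II_lmult II_rmult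
          II_0 fhom_def[symmetric] intro: II_add II_neg II_lmult II_rmult,
         metis II_0 add_0 add_diff_cancel_left' diff_self hom_diff)
  have "rels r \<subseteq> J"
  proof
    fix x assume "x \<in> rels r"
    then consider (m) i where "x = letter (T i) - letter (T (i mod int r))"
      | (q) i where "x = (letter (T i) - const vv) * (letter (T i) + const vinv)"
      | (b) i where "x = letter (T i) * letter (T (i+1)) * letter (T i) - letter (T (i+1)) * letter (T i) * letter (T (i+1))"
      | (c) i j where "x = letter (T i) * letter (T j) - letter (T j) * letter (T i)"
          "\<not> [i - j = 1] (mod int r)" "\<not> [i - j = -1] (mod int r)"
      | (rho) i where "x = letter Rho * letter (T i) - letter (T (i+1)) * letter Rho"
      | (r1) "x = letter Rho * letter RhoInv - 1" | (r2) "x = letter RhoInv * letter Rho - 1"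
      unfolding rels_def by blast
    then show "x \<in> J"
    proof cases
      case m
      have "?F (T i) = ?F (T (i mod int r))" by (simp add: Fimg_def mod_diff_left_eq)
      then show ?thesis using m by (simp add: J_def hom_diff hom_letter II_0)
    next
      case q
      have "cls ?N (?F (T i) * ?F (T i)) = cls ?N (cc0 * ?F (T i) + 1)"
        using P.C2[of i] by (simp add: cls_mult cls_add cls_one cT cc0_def scal_def)
      then show ?thesis using q II_of_cls
        by (simp add: J_def hom_mult hom_diff hom_add hom_letter hom_const hom_one quad_expand cc0_def)
    next
      case b
      have "cls ?N (?F (T i) * ?F (T (i+1)) * ?F (T i)) = cls ?N (?F (T (i+1)) * ?F (T i) * ?F (T (i+1)))"
        using P.C3[of i] by (simp add: cls_mult cT)
      then show ?thesis using b II_of_cls by (simp add: J_def hom_mult hom_diff hom_letter)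
    next
      case c
      have "cls ?N (?F (T i) * ?F (T j)) = cls ?N (?F (T j) * ?F (T i))"
        using P.C4[OF c(2,3)] by (simp add: cls_mult cT)
      then show ?thesis using c II_of_cls by (simp add: J_def hom_mult hom_diff hom_letter)
    next
      case rho
      have "cls ?N (?F Rho * ?F (T i)) = cls ?N (?F (T (i+1)) * ?F Rho)"
        using P.C5[of i] by (simp add: cls_mult cT cR)
      then show ?thesis using rho II_of_cls by (simp add: J_def hom_mult hom_diff hom_letter)
    next
      case r1
      have "cls ?N (?F Rho * ?F RhoInv) = cls ?N 1"
        using P.C6(1) by (simp add: cls_mult cR cRi cls_one)
      then show ?thesis using r1 II_of_cls by (simp add: J_def hom_mult hom_diff hom_letter hom_one)
    next
      case r2
      have "cls ?N (?F RhoInv * ?F Rho) = cls ?N 1"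
        using P.C6(2) by (simp add: cls_mult cR cRi cls_one)
      then show ?thesis using r2 II_of_cls by (simp add: J_def hom_mult hom_diff hom_letter hom_one)
    qed
  qed
  then have "II r \<subseteq> J" by (rule II_min[OF idJ])
  then show ?thesis by (auto simp: J_def)
qed

locale modE = hk +
  fixes im :: int
  assumes im1: "1 \<le> im" and imN: "im \<le> int N - 1"
begin

definition opj :: "int \<Rightarrow> 'a \<Rightarrow> 'a \<Rightarrow> 'a \<Rightarrow> 'a" where
  "opj j x y z = (if j = int N then cc \<otimes> y \<oplus> rhi \<otimes> x else if j = 0 then rh \<otimes> z else t (j + im) \<otimes> y)"

definition Ob :: "int \<Rightarrow> (int \<Rightarrow> 'a) \<Rightarrow> int \<Rightarrow> 'a" where
  "Ob c m k = opj ((c - k) mod int (N + 1)) (m (k - 1)) (m k) (m (k + 1))"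

definition cm :: "(int \<Rightarrow> 'a) \<Rightarrow> bool" where "cm m \<longleftrightarrow> (\<forall>k. m k \<in> carrier R)"

lemma cmD [simp]: "cm m \<Longrightarrow> m k \<in> carrier R" by (simp add: cm_def)
lemma opjC [simp]: "x \<in> carrier R \<Longrightarrow> y \<in> carrier R \<Longrightarrow> z \<in> carrier R \<Longrightarrow> opj j x y z \<in> carrier R"
  by (simp add: opj_def)
lemma ObC [simp]: "cm m \<Longrightarrow> Ob c m k \<in> carrier R" by (simp add: Ob_def)
lemma cmOb [simp]: "cm m \<Longrightarrow> cm (Ob c m)" by (simp add: cm_def)

lemma Ob_shift: "Ob c m (x + k) = Ob (c - k) (\<lambda>y. m (y + k)) x"
  by (simp add: Ob_def algebra_simps)

lemma Ob_mod: "Ob (c mod int (N + 1)) = Ob c"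
  by (rule ext)+ (simp add: Ob_def mod_diff_left_eq)

lemma cm_shift: "cm m \<Longrightarrow> cm (\<lambda>y. m (y + k))" by (simp add: cm_def)

lemma Ob_shift_fun: "(\<lambda>y. Ob c m (y + k)) = Ob (c - k) (\<lambda>y. m (y + k))"
  by (rule ext) (rule Ob_shift)

lemma rhi_t: "t x \<otimes> rhi = rhi \<otimes> t (x + 1)"
proof -
  have "t x \<otimes> rhi = rhi \<otimes> (rh \<otimes> t x) \<otimes> rhi" by (simp add: m_assoc rr2')
  also have "\<dots> = rhi \<otimes> t (x + 1) \<otimes> (rh \<otimes> rhi)" by (simp add: rho m_assoc)
  finally show ?thesis by (simp add: rr1)
qed
lemma rhi_t': "z \<in> carrier R \<Longrightarrow> t x \<otimes> (rhi \<otimes> z) = rhi \<otimes> (t (x + 1) \<otimes> z)"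
  by (simp add: assoc_z[OF rhi_t] m_assoc)

lemma N3': "int N \<ge> 3" using N3 by simp

end

context modE begin

lemma mA: "0 \<le> x \<Longrightarrow> x \<le> int N \<Longrightarrow> x mod (1 + int N) = x" by simp
lemma mm: "(x + (-1) * (1 + int N)) mod (1 + int N) = x mod (1 + int N)" "(x + 1 * (1 + int N)) mod (1 + int N) = x mod (1 + int N)"
  by (simp only: mod_mult_self1)+
lemma mD: "(- 1) mod (1 + int N) = int N"
  using mm(1)[of "int N"] by simp
lemma mE: "(- 2) mod (1 + int N) = int N - 1"
  using mm(1)[of "int N - 1"] N3' by simp
lemma mC: "(int N + 2) mod (1 + int N) = 1" "(2 + int N) mod (1 + int N) = 1"
  using mm(2)[of 1] N3' by (simp_all add: add.commute)
lemma mB: "(int N + 1) mod (1 + int N) = 0" "(1 + int N) mod (1 + int N) = 0"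
  by (simp_all add: add.commute)
lemmas mods = mA mD mE mC mB

lemma E2_0: assumes m: "cm m" and j: "0 \<le> j" "j \<le> int N"
  shows "Ob j (Ob j m) 0 = cc \<otimes> Ob j m 0 \<oplus> m 0"
proof -
  consider "j = int N" | "j = 0" | "1 \<le> j \<and> j \<le> int N - 1" using j by linarith
  then show ?thesis
  proof cases
    case 1
    then show ?thesis using m N3' by (simp add: Ob_def mods) (simp add: opj_def rr2')
  next
    case 2
    then show ?thesis using m N3' by (simp add: Ob_def mods) (simp add: opj_def rr1' r_distr ccl)
  next
    case 3
    then show ?thesis using m N3' by (simp add: Ob_def mods) (simp add: opj_def quad')
  qed
qed

lemma ccl_t: "z \<in> carrier R \<Longrightarrow> t x \<otimes> (cc \<otimes> z) = cc \<otimes> (t x \<otimes> z)" by (simp add: ccl)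
lemma ccl_rh: "z \<in> carrier R \<Longrightarrow> rh \<otimes> (cc \<otimes> z) = cc \<otimes> (rh \<otimes> z)" by (simp add: ccl)
lemma ccl_rhi: "z \<in> carrier R \<Longrightarrow> rhi \<otimes> (cc \<otimes> z) = cc \<otimes> (rhi \<otimes> z)" by (simp add: ccl)
lemma H1: "z \<in> carrier R \<Longrightarrow> rh \<otimes> (t x \<otimes> (rhi \<otimes> z)) = t (x + 1) \<otimes> z"
  by (simp add: rho' rr1')
lemma H2: "z \<in> carrier R \<Longrightarrow> rhi \<otimes> (t x \<otimes> (rh \<otimes> z)) = t (x - 1) \<otimes> z"
proof -
  assume z: "z \<in> carrier R"
  have "t x \<otimes> (rh \<otimes> z) = rh \<otimes> (t (x - 1) \<otimes> z)" using rho'[OF z, of "x - 1"] by simp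
  then show ?thesis using z by (simp add: rr2')
qed
lemma tN: "t (x + int N) = t x" "t (int N + x) = t x"
  by (rule t_cong, simp)+

lemma tN2: "x = y + int N \<Longrightarrow> t x = t y"
  by (rule t_cong) (simp only: mod_add_self2)

lemma K1: "z \<in> carrier R \<Longrightarrow> t (int N - 1 + im) \<otimes> (rhi \<otimes> (rhi \<otimes> z)) = rhi \<otimes> (rhi \<otimes> (t (1 + im) \<otimes> z))"
proof -
  assume z: "z \<in> carrier R"
  have "t (int N - 1 + im) \<otimes> (rhi \<otimes> (rhi \<otimes> z)) = rhi \<otimes> (rhi \<otimes> (t (int N - 1 + im + 1 + 1) \<otimes> z))"
    using z by (simp add: rhi_t')
  also have "t (int N - 1 + im + 1 + 1) = t (1 + im)" by (rule tN2) simp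
  finally show ?thesis .
qed
lemma K2: "z \<in> carrier R \<Longrightarrow> rh \<otimes> (rh \<otimes> (t (int N - 1 + im) \<otimes> z)) = t (1 + im) \<otimes> (rh \<otimes> (rh \<otimes> z))"
proof -
  assume z: "z \<in> carrier R"
  have "rh \<otimes> (rh \<otimes> (t (int N - 1 + im) \<otimes> z)) = t (int N - 1 + im + 1 + 1) \<otimes> (rh \<otimes> (rh \<otimes> z))"
    using z by (simp add: rho')
  also have "t (int N - 1 + im + 1 + 1) = t (1 + im)" by (rule tN2) simp
  finally show ?thesis .
qed

lemma E3_N: assumes m: "cm m" and j: "j = int N"
  shows "Ob j (Ob (j + 1) (Ob j m)) 0 = Ob (j + 1) (Ob j (Ob (j + 1) m)) 0"
  using m N3' j apply (simp add: Ob_def mods) apply (simp add: opj_def r_distr ccl_t ccl_rh ccl_rhi H1 H2 tN)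
  done
lemma E3_Z: assumes m: "cm m" and j: "j = 0"
  shows "Ob j (Ob (j + 1) (Ob j m)) 0 = Ob (j + 1) (Ob j (Ob (j + 1) m)) 0"
  using m N3' j by (simp add: Ob_def mods) (simp add: opj_def K2)
lemma E3_N1: assumes m: "cm m" and j: "j = int N - 1"
  shows "Ob j (Ob (j + 1) (Ob j m)) 0 = Ob (j + 1) (Ob j (Ob (j + 1) m)) 0"
  using m N3' j apply (simp add: Ob_def mods) apply (simp add: opj_def r_distr ccl_t ccl_rh ccl_rhi K1 quad' rr2' a_ac)
  done
lemma E3_G: assumes m: "cm m" and j: "1 \<le> j" "j \<le> int N - 2"
  shows "Ob j (Ob (j + 1) (Ob j m)) 0 = Ob (j + 1) (Ob j (Ob (j + 1) m)) 0"
proof -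
  have e: "j + 1 + im = (j + im) + 1" by simp
  show ?thesis using m N3' j by (simp add: Ob_def mods) (simp add: opj_def e braid')
qed

lemma E4_N: assumes m: "cm m" and j2: "1 \<le> j2" "j2 \<le> int N - 2"
  shows "Ob (int N) (Ob j2 m) 0 = Ob j2 (Ob (int N) m) 0"
proof -
  have e: "j2 + 1 + im = (j2 + im) + 1" by simp
  have r: "t (j2 + im) \<otimes> (rhi \<otimes> z) = rhi \<otimes> (t (j2 + 1 + im) \<otimes> z)" if "z \<in> carrier R" for z
    unfolding e by (rule rhi_t'[OF that])
  show ?thesis using m N3' j2 by (simp add: Ob_def mods) (simp add: opj_def r_distr ccl_t r)
qed

lemma E4_Z: assumes m: "cm m" and j2: "2 \<le> j2" "j2 \<le> int N - 1"
  shows "Ob 0 (Ob j2 m) 0 = Ob j2 (Ob 0 m) 0"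
proof -
  have e: "j2 + im = (j2 - 1 + im) + 1" by simp
  have r: "rh \<otimes> (t (j2 - 1 + im) \<otimes> z) = t (j2 + im) \<otimes> (rh \<otimes> z)" if "z \<in> carrier R" for z
    unfolding e by (rule rho'[OF that])
  show ?thesis using m N3' j2 by (simp add: Ob_def mods) (simp add: opj_def r)
qed

lemma E4_G: assumes m: "cm m" and j: "1 \<le> j1" "j1 \<le> int N - 1" "1 \<le> j2" "j2 \<le> int N - 1"
   "j1 - j2 \<noteq> 1" "j1 - j2 \<noteq> -1"
  shows "Ob j1 (Ob j2 m) 0 = Ob j2 (Ob j1 m) 0"
proof (cases "j1 = j2")
  case True then show ?thesis by simp
next
  case False
  have c: "t (j1 + im) \<otimes> (t (j2 + im) \<otimes> z) = t (j2 + im) \<otimes> (t (j1 + im) \<otimes> z)" if "z \<in> carrier R" for z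
    by (rule comm_range'[OF _ that]) (use j False in auto)
  show ?thesis using m N3' j by (simp add: Ob_def mods) (simp add: opj_def c)
qed

lemma cong_facts:
  assumes "\<not> [a = 1] (mod (1 + int N))" "\<not> [a = -1] (mod (1 + int N))"
  shows "a \<noteq> 1" "a \<noteq> -1" "a \<noteq> int N" "a \<noteq> - int N"
proof -
  show "a \<noteq> 1" using assms(1) by auto
  show "a \<noteq> -1" using assms(2) by auto
  show "a \<noteq> int N"
  proof
    assume "a = int N"
    then have "[a = -1] (mod (1 + int N))" by (simp add: cong_def mD)
    with assms(2) show False ..
  qed
  show "a \<noteq> - int N"
  proof
    assume "a = - int N"
    then have "a = 1 + (-1) * (1 + int N)" by simp
    then have "[a = 1] (mod (1 + int N))" by (simp only: cong_def mod_mult_self1)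
    with assms(1) show False ..
  qed
qed

lemma E4_0: assumes m: "cm m" and j: "0 \<le> j1" "j1 \<le> int N" "0 \<le> j2" "j2 \<le> int N"
  and h: "\<not> [j1 - j2 = 1] (mod (1 + int N))" "\<not> [j1 - j2 = -1] (mod (1 + int N))"
  shows "Ob j1 (Ob j2 m) 0 = Ob j2 (Ob j1 m) 0"
proof -
  note cf = cong_facts[OF h]
  consider "j1 = j2" | "j1 = int N" "j2 \<noteq> j1" | "j1 = 0" "j2 \<noteq> j1" | "j2 = int N" "j2 \<noteq> j1" | "j2 = 0" "j2 \<noteq> j1"
    | "1 \<le> j1" "j1 \<le> int N - 1" "1 \<le> j2" "j2 \<le> int N - 1" using j by linarith
  then show ?thesis
  proof cases
    case 1 then show ?thesis by simp
  next
    case 2 then show ?thesis using E4_N[OF m, of j2] cf j by auto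
  next
    case 3 then show ?thesis using E4_Z[OF m, of j2] cf j by auto
  next
    case 4 then show ?thesis using E4_N[OF m, of j1] cf j by auto
  next
    case 5 then show ?thesis using E4_Z[OF m, of j1] cf j by auto
  next
    case 6 then show ?thesis using E4_G[OF m] cf by auto
  qed
qed

end

context modE begin

lemma Ob_cong: "x mod int (N + 1) = y mod int (N + 1) \<Longrightarrow> Ob x = Ob y"
  by (metis Ob_mod)

lemma shift0: "Ob c m k = Ob (c - k) (\<lambda>y. m (y + k)) 0"
  using Ob_shift[of c m 0 k] by simp

lemma jrange: "0 \<le> x mod int (N + 1)" "x mod int (N + 1) \<le> int N"
proof -
  have "x mod int (N + 1) < int (N + 1)" by (rule pos_mod_bound) simp
  then show "x mod int (N + 1) \<le> int N" by linarith
  show "0 \<le> x mod int (N + 1)" by (rule pos_mod_sign) simp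
qed

lemma E2: assumes m: "cm m" shows "Ob c (Ob c m) k = cc \<otimes> Ob c m k \<oplus> m k"
proof -
  define m' where "m' = (\<lambda>y. m (y + k))"
  define j where "j = (c - k) mod int (N + 1)"
  have m': "cm m'" using m by (simp add: m'_def cm_def)
  have "Ob c (Ob c m) k = Ob (c - k) (Ob (c - k) m') 0"
    by (simp add: shift0[of c "Ob c m" k] Ob_shift_fun m'_def)
  also have "\<dots> = Ob j (Ob j m') 0" by (simp only: j_def Ob_mod)
  also have "\<dots> = cc \<otimes> Ob j m' 0 \<oplus> m' 0" by (rule E2_0[OF m']) (use jrange j_def in auto)
  also have "\<dots> = cc \<otimes> Ob c m k \<oplus> m k" by (simp only: j_def Ob_mod m'_def) (simp add: shift0[of c m k])
  finally show ?thesis .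
qed

lemma E3: assumes m: "cm m" shows "Ob c (Ob (c + 1) (Ob c m)) k = Ob (c + 1) (Ob c (Ob (c + 1) m)) k"
proof -
  define m' where "m' = (\<lambda>y. m (y + k))"
  define j where "j = (c - k) mod int (N + 1)"
  have m': "cm m'" using m by (simp add: m'_def cm_def)
  have o1: "Ob (c - k) = Ob j" by (simp only: j_def Ob_mod)
  have o2: "Ob (c + 1 - k) = Ob (j + 1)" by (rule Ob_cong) (simp add: j_def mod_simps algebra_simps)
  have "Ob c (Ob (c + 1) (Ob c m)) k = Ob (c - k) (Ob (c + 1 - k) (Ob (c - k) m')) 0"
    by (simp add: shift0[of c _ k] Ob_shift_fun m'_def)
  also have "\<dots> = Ob j (Ob (j + 1) (Ob j m')) 0" by (simp only: o1 o2)
  also have "\<dots> = Ob (j + 1) (Ob j (Ob (j + 1) m')) 0"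
  proof -
    have "0 \<le> j" "j \<le> int N" using jrange j_def by auto
    then consider "j = int N" | "j = 0" | "j = int N - 1" | "1 \<le> j \<and> j \<le> int N - 2" by linarith
    then show ?thesis using E3_N[OF m'] E3_Z[OF m'] E3_N1[OF m'] E3_G[OF m'] by cases auto
  qed
  also have "\<dots> = Ob (c + 1 - k) (Ob (c - k) (Ob (c + 1 - k) m')) 0" by (simp only: o1 o2)
  also have "\<dots> = Ob (c + 1) (Ob c (Ob (c + 1) m)) k"
    by (simp add: shift0[of "c + 1" _ k] Ob_shift_fun m'_def)
  finally show ?thesis .
qed

lemma E4: assumes m: "cm m" and h: "\<not> [c1 - c2 = 1] (mod int (N + 1))" "\<not> [c1 - c2 = -1] (mod int (N + 1))"
  shows "Ob c1 (Ob c2 m) k = Ob c2 (Ob c1 m) k"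
proof -
  define m' where "m' = (\<lambda>y. m (y + k))"
  define j1 where "j1 = (c1 - k) mod int (N + 1)"
  define j2 where "j2 = (c2 - k) mod int (N + 1)"
  have m': "cm m'" using m by (simp add: m'_def cm_def)
  have o1: "Ob (c1 - k) = Ob j1" by (simp only: j1_def Ob_mod)
  have o2: "Ob (c2 - k) = Ob j2" by (simp only: j2_def Ob_mod)
  have md: "(j1 - j2) mod int (N + 1) = (c1 - c2) mod int (N + 1)"
    by (simp add: j1_def j2_def mod_diff_eq)
  have h': "\<not> [j1 - j2 = 1] (mod (1 + int N))" "\<not> [j1 - j2 = -1] (mod (1 + int N))"
    using h md by (simp_all add: cong_def add.commute)
  have "Ob c1 (Ob c2 m) k = Ob j1 (Ob j2 m') 0"
    by (simp add: shift0[of c1 _ k] Ob_shift_fun m'_def o1 o2)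
  also have "\<dots> = Ob j2 (Ob j1 m') 0"
    by (rule E4_0[OF m' _ _ _ _ h']) (use jrange j1_def j2_def in auto)
  also have "\<dots> = Ob c2 (Ob c1 m) k"
    by (simp add: shift0[of c2 _ k] Ob_shift_fun m'_def o1 o2)
  finally show ?thesis .
qed

lemma E5: "Ob c m (k - 1) = Ob (c + 1) (\<lambda>y. m (y - 1)) k"
  by (simp add: Ob_def algebra_simps)

end

definition opjf :: "nat \<Rightarrow> int \<Rightarrow> int \<Rightarrow> freealg \<Rightarrow> freealg \<Rightarrow> freealg \<Rightarrow> freealg" where
  "opjf r im j x y z = (if j = int r then cc0 * y + letter RhoInv * x else if j = 0 then letter Rho * z else tf (j + im) * y)"

definition ObF :: "nat \<Rightarrow> int \<Rightarrow> int \<Rightarrow> (int \<Rightarrow> freealg) \<Rightarrow> int \<Rightarrow> freealg" where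
  "ObF r im c m k = opjf r im ((c - k) mod int (r + 1)) (m (k - 1)) (m k) (m (k + 1))"

definition opE :: "nat \<Rightarrow> int \<Rightarrow> gen \<Rightarrow> (int \<Rightarrow> freealg) \<Rightarrow> (int \<Rightarrow> freealg)" where
  "opE r im g m = (case g of T i \<Rightarrow> ObF r im (i - im - 1) m | Rho \<Rightarrow> (\<lambda>k. m (k - 1)) | RhoInv \<Rightarrow> (\<lambda>k. m (k + 1)))"

definition sM :: "laurent \<Rightarrow> (int \<Rightarrow> freealg) \<Rightarrow> (int \<Rightarrow> freealg)" where
  "sM a m = (\<lambda>k. const a * m k)"

lemma opjf_add: "opjf r im j (x + x') (y + y') (z + z') = opjf r im j x y z + opjf r im j x' y' z'"
  by (simp add: opjf_def distrib_left)

lemma cc_in: "const a * (u * v) = u * (const a * v)" by (metis const_central mult.assoc)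

lemma opjf_const: "const a * opjf r im j x y z = opjf r im j (const a * x) (const a * y) (const a * z)"
  by (simp add: opjf_def distrib_left cc_in)

lemma frep_M: "frep sM (opE r im)"
proof
  fix g and x y :: "int \<Rightarrow> freealg"
  show "opE r im g (x + y) = opE r im g x + opE r im g y"
    by (cases g) (auto simp: opE_def ObF_def opjf_add fun_eq_iff)
next
  fix a x y show "sM a (x + y) = sM a x + sM a y" by (simp add: sM_def fun_eq_iff distrib_left)
next
  fix a b x show "sM (a + b) x = sM a x + sM b x" by (simp add: sM_def fun_eq_iff distrib_right const_add)
next
  fix a b x show "sM (a * b) x = sM a (sM b x)" by (simp add: sM_def fun_eq_iff const_mult mult.assoc)
next
  fix x show "sM 1 x = x" by (simp add: sM_def const_one)
next
  fix a g x show "sM a (opE r im g x) = opE r im g (sM a x)"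
    by (cases g) (auto simp: sM_def opE_def ObF_def opjf_const fun_eq_iff)
qed

definition actM :: "nat \<Rightarrow> int \<Rightarrow> freealg \<Rightarrow> (int \<Rightarrow> freealg) \<Rightarrow> (int \<Rightarrow> freealg)" where
  "actM r im = frep.act sM (opE r im)"

definition inII :: "nat \<Rightarrow> (int \<Rightarrow> freealg) \<Rightarrow> bool" where
  "inII n m \<longleftrightarrow> (\<forall>k. m k \<in> II n)"

lemma inII_opE: "inII r m \<Longrightarrow> inII r (opE r im g m)"
  by (cases g) (auto simp: inII_def opE_def ObF_def opjf_def intro!: II_add II_lmult)

lemma inII_sM: "inII r m \<Longrightarrow> inII r (sM a m)"
  by (auto simp: inII_def sM_def intro!: II_lmult)

lemma inII_add: "inII r m \<Longrightarrow> inII r m' \<Longrightarrow> inII r (m + m')"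
  by (auto simp: inII_def intro!: II_add)

lemma inII_wl: "inII r m \<Longrightarrow> inII r (wl (opE r im) xs m)"
  by (induct xs) (auto simp: inII_opE)

lemma inII_actM: "inII r m \<Longrightarrow> inII r (actM r im p m)"
proof -
  interpret fr: frep sM "opE r im" by (rule frep_M)
  assume m: "inII r m"
  show ?thesis unfolding actM_def
  proof (induct p rule: pm_induct)
    case zero then show ?case by (simp add: inII_def II_0)
  next
    case (add f w b)
    have "inII r (wact (opE r im) w m)" using m by (cases w) (simp add: inII_wl)
    then have "inII r (sM b (wact (opE r im) w m))" by (rule inII_sM)
    then show ?case unfolding fr.act_add_p fr.act_single using add by (rule inII_add[rotated])
  qed
qed

lemma modE_Hecke:
  assumes "r > 2" "1 \<le> im" "im \<le> int r - 1"
  shows "modE (Hecke r) r (gT r) (gRho r) (gRhoInv r) (scal r (vv - vinv)) im"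
proof -
  interpret hk "Hecke r" "r" "gT r" "gRho r" "gRhoInv r" "scal r (vv - vinv)"
    by (rule hk_Hecke) (use assms in simp)
  show ?thesis by unfold_locales (use assms in auto)
qed

definition clsM :: "nat \<Rightarrow> (int \<Rightarrow> freealg) \<Rightarrow> int \<Rightarrow> freealg set" where
  "clsM r m = (\<lambda>k. cls r (m k))"

context
  fixes r :: nat and im :: int
  assumes r: "r > 2" "1 \<le> im" "im \<le> int r - 1"
begin

interpretation Q: modE "Hecke r" "r" "gT r" "gRho r" "gRhoInv r" "scal r (vv - vinv)" im
  by (rule modE_Hecke[OF r])

interpretation fr: frep sM "opE r im" by (rule frep_M)

lemma cmM: "Q.cm (clsM r m)" by (simp add: Q.cm_def clsM_def)

lemma clsM_ObF: "clsM r (ObF r im c m) = Q.Ob c (clsM r m)"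
  unfolding ObF_def Q.Ob_def opjf_def Q.opj_def
  by (rule ext) (simp add: clsM_def cls_add cls_mult cc0_def scal_def gRhoInv_def gRho_def gT_def tf_def)

lemma clsM_opT: "clsM r (opE r im (T i) m) = Q.Ob (i - im - 1) (clsM r m)"
  by (simp add: opE_def clsM_ObF)

lemma clsM_app: "clsM r m k = cls r (m k)" by (simp add: clsM_def)

lemma cls_opT: "cls r (opE r im (T i) m k) = Q.Ob (i - im - 1) (clsM r m) k"
  using fun_cong[OF clsM_opT[of i m], of k] by (simp add: clsM_def)

lemma inII_cls: "(\<And>k. cls r (m k) = \<zero>\<^bsub>Hecke r\<^esub>) \<Longrightarrow> inII r m"
  by (simp add: inII_def cls_eq0)

lemma Mod_II: "p \<in> II (r + 1) \<Longrightarrow> inII r (actM r im p m)"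
proof -
  define J where "J = {p. \<forall>m. inII r (actM r im p m)}"
  have idJ: "ideal J FA"
  proof (rule ideal_FA_I)
    show "0 \<in> J" by (simp add: J_def actM_def inII_def II_0)
  next
    fix x y assume "x \<in> J" "y \<in> J" then show "x + y \<in> J"
      by (simp add: J_def actM_def fr.act_add_p inII_add)
  next
    fix x assume "x \<in> J" then show "- x \<in> J"
      by (simp add: J_def actM_def fr.act_neg inII_def II_neg)
  next
    fix x a assume "x \<in> J" then show "a * x \<in> J"
      by (simp add: J_def fr.act_mult inII_actM[unfolded actM_def] actM_def)
  next
    fix x a assume "x \<in> J" then show "x * a \<in> J"
      by (simp add: J_def fr.act_mult actM_def)
  qed
  have "rels (r + 1) \<subseteq> J"
  proof
    fix x assume "x \<in> rels (r + 1)"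
    then consider (m) i where "x = letter (T i) - letter (T (i mod int (r + 1)))"
      | (q) i where "x = (letter (T i) - const vv) * (letter (T i) + const vinv)"
      | (b) i where "x = letter (T i) * letter (T (i+1)) * letter (T i) - letter (T (i+1)) * letter (T i) * letter (T (i+1))"
      | (c) i j where "x = letter (T i) * letter (T j) - letter (T j) * letter (T i)"
          "\<not> [i - j = 1] (mod int (r + 1))" "\<not> [i - j = -1] (mod int (r + 1))"
      | (rho) i where "x = letter Rho * letter (T i) - letter (T (i+1)) * letter Rho"
      | (r1) "x = letter Rho * letter RhoInv - 1" | (r2) "x = letter RhoInv * letter Rho - 1"
      unfolding rels_def by blast
    then show "x \<in> J"
    proof cases
      case m
      have e: "(i mod int (r+1) - im - 1 - k) mod int (r+1) = (i - im - 1 - k) mod int (r+1)" for k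
        by (metis diff_diff_eq mod_diff_left_eq)
      have "opE r im (T i) = opE r im (T (i mod int (r + 1)))"
        by (rule ext)+ (simp only: opE_def ObF_def gen.case e)
      then show ?thesis using m by (simp add: J_def actM_def fr.act_diff fr.act_letter inII_def II_0)
    next
      case q
      show ?thesis unfolding J_def
      proof (intro CollectI allI inII_cls)
        fix m k
        let ?M = "clsM r m" and ?c = "i - im - 1"
        have "clsM r (actM r im x m) k = Q.Ob ?c (Q.Ob ?c ?M) k \<ominus>\<^bsub>Hecke r\<^esub> (scal r (vv - vinv) \<otimes>\<^bsub>Hecke r\<^esub> Q.Ob ?c ?M k \<oplus>\<^bsub>Hecke r\<^esub> ?M k)"
          unfolding q quad_expand actM_def
          by (simp add: fr.act_diff fr.act_mult fr.act_add_p fr.act_letter fr.act_const fr.act_one sM_def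
            cls_diff cls_add cls_mult cls_opT clsM_opT clsM_app scal_def)
        also have "\<dots> = \<zero>\<^bsub>Hecke r\<^esub>" using Q.E2[OF cmM] by (simp add: a_minus_def Q.r_neg Q.ObC[OF cmM] clsM_app)
        finally show "cls r (actM r im x m k) = \<zero>\<^bsub>Hecke r\<^esub>" by (simp add: clsM_def)
      qed
    next
      case b
      show ?thesis unfolding J_def
      proof (intro CollectI allI inII_cls)
        fix m k
        show "cls r (actM r im x m k) = \<zero>\<^bsub>Hecke r\<^esub>"
          using Q.E3[OF cmM, of "i - im - 1" m k]
          by (simp add: b actM_def fr.act_diff fr.act_mult fr.act_letter cls_diff cls_opT clsM_opT
              clsM_app a_minus_def Q.r_neg Q.ObC Q.cmOb cmM)
      qed
    next
      case c
      have h: "\<not> [(i - im - 1) - (j - im - 1) = 1] (mod int (r + 1))" "\<not> [(i - im - 1) - (j - im - 1) = -1] (mod int (r + 1))"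
        using c(2,3) by simp_all
      show ?thesis unfolding J_def
      proof (intro CollectI allI inII_cls)
        fix m k
        show "cls r (actM r im x m k) = \<zero>\<^bsub>Hecke r\<^esub>"
          using Q.E4[OF cmM h, of m k]
          by (simp add: c(1) actM_def fr.act_diff fr.act_mult fr.act_letter cls_diff cls_opT clsM_opT
              clsM_app a_minus_def Q.r_neg Q.ObC Q.cmOb cmM)
      qed
    next
      case rho
      have e: "opE r im Rho (opE r im (T i) m) = opE r im (T (i+1)) (opE r im Rho m)" for m
        by (rule ext) (simp add: opE_def ObF_def algebra_simps)
      show ?thesis using rho e by (simp add: J_def actM_def fr.act_diff fr.act_mult fr.act_letter inII_def II_0)
    next
      case r1
      have e: "opE r im Rho (opE r im RhoInv m) = m" for m by (rule ext) (simp add: opE_def)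
      show ?thesis using r1 e by (simp add: J_def actM_def fr.act_diff fr.act_mult fr.act_letter fr.act_one inII_def II_0)
    next
      case r2
      have e: "opE r im RhoInv (opE r im Rho m) = m" for m by (rule ext) (simp add: opE_def)
      show ?thesis using r2 e by (simp add: J_def actM_def fr.act_diff fr.act_mult fr.act_letter fr.act_one inII_def II_0)
    qed
  qed
  then have "II (r + 1) \<subseteq> J" by (rule II_min[OF idJ])
  then show "p \<in> II (r + 1) \<Longrightarrow> inII r (actM r im p m)" by (auto simp: J_def)
qed

end

context modE begin

definition e1 :: "int \<Rightarrow> 'a \<Rightarrow> int \<Rightarrow> 'a" where "e1 p y = (\<lambda>k. if k = p then y else \<zero>)"

lemma opj_zero: "opj j \<zero> \<zero> \<zero> = \<zero>" by (simp add: opj_def)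

lemma G1: assumes y: "y \<in> carrier R" and u: "1 \<le> u" "u \<le> int N - 1"
  shows "Ob u (e1 0 y) = e1 0 (t (u + im) \<otimes> y)"
proof (rule ext)
  fix k :: int
  consider "k = 0" | "k = 1" | "k = -1" | "k \<noteq> 0 \<and> k \<noteq> 1 \<and> k \<noteq> -1" by blast
  then show "Ob u (e1 0 y) k = e1 0 (t (u + im) \<otimes> y) k"
  proof cases
    case 1 then show ?thesis using u y N3' by (simp add: Ob_def e1_def mods opj_def)
  next
    case 2 then show ?thesis using u y N3' by (simp add: Ob_def e1_def mods opj_def)
  next
    case 3 then show ?thesis using u y N3' by (simp add: Ob_def e1_def mods opj_def)
  next
    case 4 then show ?thesis by (simp add: Ob_def e1_def opj_zero)
  qed
qed

lemma G2a: assumes y: "y \<in> carrier R"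
  shows "(\<lambda>k. Ob (- 1) (e1 0 y) k \<ominus> cc \<otimes> e1 0 y k) = e1 (-1) (rh \<otimes> y)"
proof (rule ext)
  fix k :: int
  consider "k = 0" | "k = 1" | "k = -1" | "k \<noteq> 0 \<and> k \<noteq> 1 \<and> k \<noteq> -1" by blast
  then show "Ob (- 1) (e1 0 y) k \<ominus> cc \<otimes> e1 0 y k = e1 (-1) (rh \<otimes> y) k"
  proof cases
    case 1 then show ?thesis using y N3' by (simp add: Ob_def e1_def mods opj_def a_minus_def r_neg)
  next
    case 2 then show ?thesis using y N3' by (simp add: Ob_def e1_def mods opj_def a_minus_def)
  next
    case 3 then show ?thesis using y N3' by (simp add: Ob_def e1_def mods opj_def a_minus_def)
  next
    case 4 then show ?thesis by (simp add: Ob_def e1_def opj_zero a_minus_def)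
  qed
qed

lemma G2b: assumes y: "y \<in> carrier R"
  shows "Ob 0 (e1 (-1) y) = e1 (-1) (t (1 + im) \<otimes> y)"
proof (rule ext)
  fix k :: int
  consider "k = 0" | "k = -2" | "k = -1" | "k \<noteq> 0 \<and> k \<noteq> -2 \<and> k \<noteq> -1" by blast
  then show "Ob 0 (e1 (-1) y) k = e1 (-1) (t (1 + im) \<otimes> y) k"
  proof cases
    case 1 then show ?thesis using y N3' by (simp add: Ob_def e1_def mods opj_def)
  next
    case 2 then show ?thesis using y N3' by (simp add: Ob_def e1_def mods opj_def)
  next
    case 3 then show ?thesis using y N3' by (simp add: Ob_def e1_def mods opj_def)
  next
    case 4 then show ?thesis by (simp add: Ob_def e1_def opj_zero)
  qed
qed

lemma G2c: assumes y: "y \<in> carrier R"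
  shows "Ob (- 1) (e1 (-1) y) = e1 0 (rhi \<otimes> y)"
proof (rule ext)
  fix k :: int
  consider "k = 0" | "k = -2" | "k = -1" | "k \<noteq> 0 \<and> k \<noteq> -2 \<and> k \<noteq> -1" by blast
  then show "Ob (- 1) (e1 (-1) y) k = e1 0 (rhi \<otimes> y) k"
  proof cases
    case 1 then show ?thesis using y N3' by (simp add: Ob_def e1_def mods opj_def)
  next
    case 2 then show ?thesis using y N3' by (simp add: Ob_def e1_def mods opj_def)
  next
    case 3 then show ?thesis using y N3' by (simp add: Ob_def e1_def mods opj_def)
  next
    case 4 then show ?thesis by (simp add: Ob_def e1_def opj_zero)
  qed
qed

lemma G3: assumes y: "y \<in> carrier R"
  shows "(\<lambda>k. Ob 0 (e1 1 y) k \<ominus> cc \<otimes> e1 1 y k) = e1 0 (rh \<otimes> y)"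
proof (rule ext)
  fix k :: int
  consider "k = 0" | "k = 1" | "k = 2" | "k \<noteq> 0 \<and> k \<noteq> 1 \<and> k \<noteq> 2" by blast
  then show "Ob 0 (e1 1 y) k \<ominus> cc \<otimes> e1 1 y k = e1 0 (rh \<otimes> y) k"
  proof cases
    case 1 then show ?thesis using y N3' by (simp add: Ob_def e1_def mods opj_def a_minus_def)
  next
    case 2 then show ?thesis using y N3' by (simp add: Ob_def e1_def mods opj_def a_minus_def r_neg)
  next
    case 3 then show ?thesis using y N3' by (simp add: Ob_def e1_def mods opj_def a_minus_def)
  next
    case 4 then show ?thesis by (simp add: Ob_def e1_def opj_zero a_minus_def)
  qed
qed

lemma G4: assumes y: "y \<in> carrier R"
  shows "(\<lambda>k. Ob 0 (e1 0 y) (k + 1)) = e1 0 (rhi \<otimes> y)"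
proof (rule ext)
  fix k :: int
  consider "k = 0" | "k = -1" | "k = -2" | "k \<noteq> 0 \<and> k \<noteq> -1 \<and> k \<noteq> -2" by blast
  then show "Ob 0 (e1 0 y) (k + 1) = e1 0 (rhi \<otimes> y) k"
  proof cases
    case 1 then show ?thesis using y N3' by (simp add: Ob_def e1_def mods opj_def)
  next
    case 2 then show ?thesis using y N3' by (simp add: Ob_def e1_def mods opj_def)
  next
    case 3 then show ?thesis using y N3' by (simp add: Ob_def e1_def mods opj_def)
  next
    case 4 then show ?thesis by (simp add: Ob_def e1_def opj_zero)
  qed
qed

end

definition e1f :: "int \<Rightarrow> freealg \<Rightarrow> int \<Rightarrow> freealg" where "e1f p h = (\<lambda>k. if k = p then h else 0)"

context
  fixes r :: nat and im :: int
  assumes r: "r > 2" "1 \<le> im" "im \<le> int r - 1"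
begin

interpretation Q: modE "Hecke r" "r" "gT r" "gRho r" "gRhoInv r" "scal r (vv - vinv)" im
  by (rule modE_Hecke[OF r])

interpretation fr: frep sM "opE r im" by (rule frep_M)

lemma clsM_e: "clsM r (e1f p h) = Q.e1 p (cls r h)"
  by (rule ext) (simp add: clsM_def e1f_def Q.e1_def cls_zero)

lemma clsM_act_T: "clsM r (actM r im (letter (T j)) m) = Q.Ob (j - im - 1) (clsM r m)"
  by (simp add: actM_def fr.act_letter clsM_opT[OF r])

lemma clsM_act_tinv: "clsM r (actM r im (tinvf j) m) = (\<lambda>k. Q.Ob (j - im - 1) (clsM r m) k \<ominus>\<^bsub>Hecke r\<^esub> scal r (vv - vinv) \<otimes>\<^bsub>Hecke r\<^esub> clsM r m k)"
  by (rule ext) (simp add: actM_def tinvf_def tf_def cc0_def fr.act_diff fr.act_letter fr.act_const sM_def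
     cls_diff cls_mult cls_opT[OF r] clsM_app[OF r] scal_def)

lemma clsM_R: "clsM r (actM r im (letter Rho) m) = (\<lambda>k. clsM r m (k - 1))"
  by (rule ext) (simp add: actM_def fr.act_letter opE_def clsM_def)

lemma clsM_Ri: "clsM r (actM r im (letter RhoInv) m) = (\<lambda>k. clsM r m (k + 1))"
  by (rule ext) (simp add: actM_def fr.act_letter opE_def clsM_def)

lemma actM_mult: "actM r im (a * b) m = actM r im a (actM r im b m)"
  by (simp add: actM_def fr.act_mult)

lemma e1_shift: "(\<lambda>k. Q.e1 0 y (k - 1)) = Q.e1 1 y"
  by (rule ext) (simp add: Q.e1_def)

lemma gen_step: "clsM r (actM r im (Fimg r im g) (e1f 0 h)) = clsM r (e1f 0 (letter g * h))"
proof (cases g)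
  case (T i)
  define u where "u = (i - im) mod int r"
  have u0: "0 \<le> u" "u < int r" using r by (auto simp: u_def)
  show ?thesis
  proof (cases "u = 0")
    case False
    have F: "Fimg r im g = letter (T (u + im + 1))" using False by (simp add: T Fimg_def u_def[symmetric] tf_def)
    have tc: "gT r (u + im) = gT r i"
      by (rule Q.t_cong) (simp add: u_def mod_add_left_eq)
    have "clsM r (actM r im (Fimg r im g) (e1f 0 h)) = Q.Ob u (Q.e1 0 (cls r h))"
      by (simp add: F clsM_act_T clsM_e)
    also have "\<dots> = Q.e1 0 (gT r (u + im) \<otimes>\<^bsub>Hecke r\<^esub> cls r h)"
      by (rule Q.G1) (use False u0 in auto)
    also have "\<dots> = clsM r (e1f 0 (letter g * h))" using tc by (simp add: clsM_e T cls_mult gT_def)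
    finally show ?thesis .
  next
    case True
    have F: "Fimg r im g = tf im * tf (im + 1) * tinvf im" using True by (simp add: T Fimg_def u_def[symmetric])
    have tc: "gT r im = gT r i"
      by (rule Q.t_cong) (use True in \<open>simp add: u_def mod_eq_dvd_iff dvd_eq_mod_eq_0[symmetric], metis dvd_minus_iff minus_diff_eq\<close>)
    have h2: "gRhoInv r \<otimes>\<^bsub>Hecke r\<^esub> (gT r (1 + im) \<otimes>\<^bsub>Hecke r\<^esub> (gRho r \<otimes>\<^bsub>Hecke r\<^esub> cls r h)) = gT r im \<otimes>\<^bsub>Hecke r\<^esub> cls r h"
      using Q.H2[of "cls r h" "1 + im"] by simp
    have "clsM r (actM r im (Fimg r im g) (e1f 0 h)) =
       Q.Ob (- 1) (Q.Ob 0 (\<lambda>k. Q.Ob (- 1) (Q.e1 0 (cls r h)) k \<ominus>\<^bsub>Hecke r\<^esub> scal r (vv - vinv) \<otimes>\<^bsub>Hecke r\<^esub> Q.e1 0 (cls r h) k))"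
      by (simp add: F actM_mult tf_def clsM_act_T clsM_act_tinv clsM_e)
    also have "\<dots> = Q.e1 0 (gT r im \<otimes>\<^bsub>Hecke r\<^esub> cls r h)"
      by (simp add: Q.G2a Q.G2b Q.G2c h2)
    also have "\<dots> = clsM r (e1f 0 (letter g * h))" using tc by (simp add: clsM_e T cls_mult gT_def)
    finally show ?thesis .
  qed
next
  case Rho
  have "clsM r (actM r im (Fimg r im g) (e1f 0 h)) =
     (\<lambda>k. Q.Ob 0 (Q.e1 1 (cls r h)) k \<ominus>\<^bsub>Hecke r\<^esub> scal r (vv - vinv) \<otimes>\<^bsub>Hecke r\<^esub> Q.e1 1 (cls r h) k)"
    by (simp add: Rho Fimg_def actM_mult clsM_act_tinv clsM_R clsM_e e1_shift)
  also have "\<dots> = Q.e1 0 (gRho r \<otimes>\<^bsub>Hecke r\<^esub> cls r h)" by (simp add: Q.G3)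
  also have "\<dots> = clsM r (e1f 0 (letter g * h))" by (simp add: clsM_e Rho cls_mult gRho_def)
  finally show ?thesis .
next
  case RhoInv
  have "clsM r (actM r im (Fimg r im g) (e1f 0 h)) = (\<lambda>k. Q.Ob 0 (Q.e1 0 (cls r h)) (k + 1))"
    by (simp add: RhoInv Fimg_def actM_mult tf_def clsM_act_T clsM_Ri clsM_e)
  also have "\<dots> = Q.e1 0 (gRhoInv r \<otimes>\<^bsub>Hecke r\<^esub> cls r h)" by (simp add: Q.G4)
  also have "\<dots> = clsM r (e1f 0 (letter g * h))" by (simp add: clsM_e RhoInv cls_mult gRhoInv_def)
  finally show ?thesis .
qed

lemma inII_of_clsM: "clsM r m1 = clsM r m2 \<Longrightarrow> inII r (\<lambda>k. m1 k - m2 k)"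
  unfolding inII_def using cls_eq by (metis clsM_app[OF r])

lemma hom_zero: "fhom F 0 = 0" using hom_diff[of F 0 0] by simp

lemma inII_zero: "inII r (\<lambda>k. 0)" by (simp add: inII_def II_0)

lemma single_cons: "Poly_Mapping.single (Word (g # gs)) b = letter g * Poly_Mapping.single (Word gs) b"
  by (simp add: letter_def mult_single)

lemma S_lemma: "inII r (\<lambda>k. actM r im (fhom (Fimg r im) (Poly_Mapping.single (Word xs) b)) (e1f 0 h) k
     - e1f 0 (Poly_Mapping.single (Word xs) b * h) k)"
proof (induct xs arbitrary: h)
  case Nil
  have c: "Poly_Mapping.single (Word []) b = const b" by (simp add: const_def)
  show ?case by (simp add: c hom_const actM_def fr.act_const sM_def e1f_def inII_def II_0)
next
  case (Cons g gs)
  let ?s = "Poly_Mapping.single (Word gs) b" and ?F = "Fimg r im"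
  define D where "D = (\<lambda>k. actM r im (fhom ?F ?s) (e1f 0 h) k - e1f 0 (?s * h) k)"
  have D: "inII r D" using Cons unfolding D_def .
  have eq: "actM r im (fhom ?F ?s) (e1f 0 h) = e1f 0 (?s * h) + D" by (rule ext) (simp add: D_def)
  have A: "inII r (\<lambda>k. actM r im (?F g) (e1f 0 (?s * h)) k - e1f 0 (letter g * (?s * h)) k)"
    by (rule inII_of_clsM) (rule gen_step)
  have B: "inII r (actM r im (?F g) D)" using D by (rule inII_actM)
  have "(\<lambda>k. actM r im (fhom ?F (Poly_Mapping.single (Word (g # gs)) b)) (e1f 0 h) k
     - e1f 0 (Poly_Mapping.single (Word (g # gs)) b * h) k) =
     (\<lambda>k. actM r im (?F g) (e1f 0 (?s * h)) k - e1f 0 (letter g * (?s * h)) k) + actM r im (?F g) D"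
    unfolding single_cons hom_mult hom_letter actM_mult eq
    by (rule ext) (simp add: actM_def fr.act_add_m mult.assoc)
  then show ?case using inII_add[OF A B] by simp
qed

lemma e0_hom: "inII r (\<lambda>k. actM r im (fhom (Fimg r im) y) (e1f 0 h) k - e1f 0 (y * h) k)"
proof (induct y rule: pm_induct)
  case zero then show ?case by (simp add: hom_zero actM_def e1f_def inII_zero)
next
  case (add f w b)
  have "(\<lambda>k. actM r im (fhom (Fimg r im) (f + Poly_Mapping.single w b)) (e1f 0 h) k - e1f 0 ((f + Poly_Mapping.single w b) * h) k)
    = (\<lambda>k. actM r im (fhom (Fimg r im) f) (e1f 0 h) k - e1f 0 (f * h) k)
      + (\<lambda>k. actM r im (fhom (Fimg r im) (Poly_Mapping.single w b)) (e1f 0 h) k - e1f 0 (Poly_Mapping.single w b * h) k)"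
    by (rule ext) (simp add: hom_add actM_def fr.act_add_p distrib_right e1f_def)
  moreover have "inII r (\<lambda>k. actM r im (fhom (Fimg r im) (Poly_Mapping.single w b)) (e1f 0 h) k - e1f 0 (Poly_Mapping.single w b * h) k)"
    by (cases w) (simp only: S_lemma)
  ultimately show ?case using inII_add[OF add] by simp
qed

lemma Phi_inj: "fhom (Fimg r im) x \<in> II (r + 1) \<Longrightarrow> x \<in> II r"
proof -
  assume h: "fhom (Fimg r im) x \<in> II (r + 1)"
  have a: "actM r im (fhom (Fimg r im) x) (e1f 0 1) 0 \<in> II r"
    using Mod_II[OF r h, of "e1f 0 1"] by (simp add: inII_def)
  have b: "actM r im (fhom (Fimg r im) x) (e1f 0 1) 0 - x \<in> II r"
  proof -
    have "\<forall>k. actM r im (fhom (Fimg r im) x) (e1f 0 1) k - e1f 0 (x * 1) k \<in> II r"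
      using e0_hom[of x 1] unfolding inII_def .
    then have "actM r im (fhom (Fimg r im) x) (e1f 0 1) 0 - e1f 0 (x * 1) 0 \<in> II r" by blast
    then show ?thesis by (simp add: e1f_def)
  qed
  show "x \<in> II r" using II_diff[OF a b] by simp
qed

end

theorem mainTheorem8:
  fixes r :: nat and im :: int
  assumes "r > 2" and "1 \<le> im" and "im \<le> int r - 1"
  shows "\<exists>\<phi> \<in> hecke_alg_hom r (r + 1).
           inj_on \<phi> (carrier (Hecke r)) \<and>
           (\<forall>i. 1 \<le> i \<and> i < im \<longrightarrow> \<phi> (gT r i) = gT (r + 1) i) \<and>
           \<phi> (gT r im) = gT (r + 1) im \<otimes>\<^bsub>Hecke (r + 1)\<^esub> gT (r + 1) (im + 1)
                          \<otimes>\<^bsub>Hecke (r + 1)\<^esub> inv\<^bsub>Hecke (r + 1)\<^esub> (gT (r + 1) im) \<and>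
           (\<forall>i. im + 1 \<le> i \<and> i \<le> int r \<longrightarrow> \<phi> (gT r i) = gT (r + 1) (i + 1)) \<and>
           \<phi> (gRho r) = inv\<^bsub>Hecke (r + 1)\<^esub> (gT (r + 1) (im + 1)) \<otimes>\<^bsub>Hecke (r + 1)\<^esub> gRho (r + 1) \<and>
           \<phi> (gRhoInv r) = gRhoInv (r + 1) \<otimes>\<^bsub>Hecke (r + 1)\<^esub> gT (r + 1) (im + 1)"
proof -
  note r = assms
  define N where "N = r + 1"
  have eqN: "r + 1 = N" by (simp add: N_def)
  let ?F = "Fimg r im"
  let ?P = "fhom ?F"
  interpret P: phiC "Hecke N" "N" "gT N" "gRho N" "gRhoInv N" "scal N (vv - vinv)" r im
    by (rule phiC_Hecke[OF r]) (simp add: N_def)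
  interpret H: ring "Hecke r" by (rule ring_Hecke)
  have PII: "x \<in> II r \<Longrightarrow> ?P x \<in> II N" for x using Phi_II[OF r, of N] by (auto simp: N_def)
  define phi where "phi C = cls N (?P (SOME x. C = cls r x))" for C
  have phi_cls: "phi (cls r x) = cls N (?P x)" for x
  proof -
    have "cls r x = cls r (SOME y. cls r x = cls r y)" by (rule someI[of _ x]) simp
    then have "x - (SOME y. cls r x = cls r y) \<in> II r" by (simp add: cls_eq)
    from PII[OF this] have "?P x - ?P (SOME y. cls r x = cls r y) \<in> II N" by (simp add: hom_diff)
    then show ?thesis unfolding phi_def by (metis cls_eq II_neg minus_diff_eq)
  qed
  have carr: "X \<in> carrier (Hecke r) \<Longrightarrow> \<exists>x. X = cls r x" for X by (auto simp: carrier_Hecke)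
  have hom: "phi \<in> ring_hom (Hecke r) (Hecke N)"
  proof (rule ring_hom_memI)
    fix X assume "X \<in> carrier (Hecke r)"
    then obtain x where "X = cls r x" using carr by blast
    then show "phi X \<in> carrier (Hecke N)" by (simp add: phi_cls)
  next
    fix X Y assume "X \<in> carrier (Hecke r)" "Y \<in> carrier (Hecke r)"
    then obtain x y where "X = cls r x" "Y = cls r y" using carr by blast
    then show "phi (X \<otimes>\<^bsub>Hecke r\<^esub> Y) = phi X \<otimes>\<^bsub>Hecke N\<^esub> phi Y"
      by (simp add: phi_cls hom_mult flip: cls_mult)
  next
    fix X Y assume "X \<in> carrier (Hecke r)" "Y \<in> carrier (Hecke r)"
    then obtain x y where "X = cls r x" "Y = cls r y" using carr by blast
    then show "phi (X \<oplus>\<^bsub>Hecke r\<^esub> Y) = phi X \<oplus>\<^bsub>Hecke N\<^esub> phi Y"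
      by (simp add: phi_cls hom_add flip: cls_add)
  next
    show "phi \<one>\<^bsub>Hecke r\<^esub> = \<one>\<^bsub>Hecke N\<^esub>" by (simp add: phi_cls hom_one flip: cls_one)
  qed
  have scal: "phi (scal r a) = scal N a" for a by (simp add: scal_def phi_cls hom_const)
  have inj: "inj_on phi (carrier (Hecke r))"
  proof (rule inj_onI)
    fix X Y assume "X \<in> carrier (Hecke r)" "Y \<in> carrier (Hecke r)" "phi X = phi Y"
    moreover obtain x y where "X = cls r x" "Y = cls r y" using carr \<open>X \<in> _\<close> \<open>Y \<in> _\<close> by blast
    ultimately have "?P (x - y) \<in> II (r + 1)" by (simp add: phi_cls cls_eq hom_diff N_def)
    then have "x - y \<in> II r" by (rule Phi_inj[OF r])
    then show "X = Y" by (simp add: \<open>X = cls r x\<close> \<open>Y = cls r y\<close> cls_eq)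
  qed
  have ctf: "cls N (tf i) = gT N i" for i by (simp add: tf_def gT_def)
  have ctinv: "cls N (tinvf i) = P.ti i" for i
    unfolding tinvf_def cc0_def P.ti_def unfolding scal_def by (simp add: cls_diff ctf)
  interpret HN: ring "Hecke N" by (rule ring_Hecke)
  have inv: "inv\<^bsub>Hecke N\<^esub> (gT N i) = P.ti i" for i
    by (rule monoid.inv_unique'[OF ring.axioms(2)[OF ring_Hecke], symmetric]) (simp_all add: P.tti P.tit)
  have a: "phi (gT r i) = gT N i" if "1 \<le> i" "i < im" for i
  proof -
    have u: "(i - im) mod int r = i - im + int r"
    proof -
      have "(i - im) mod int r = (i - im + int r) mod int r" by simp
      also have "\<dots> = i - im + int r" using that r by (intro mod_pos_pos_trivial) auto
      finally show ?thesis .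
    qed
    have "phi (gT r i) = cls N (tf (i - im + int r + im + 1))"
      using that r by (simp add: gT_def phi_cls hom_letter Fimg_def u)
    also have "\<dots> = gT N i" unfolding ctf
    proof (rule P.t_cong)
      have "i - im + int r + im + 1 = i + int N" by (simp add: N_def)
      then show "(i - im + int r + im + 1) mod int N = i mod int N" by (simp only: mod_add_self2)
    qed
    finally show ?thesis .
  qed
  have b: "phi (gT r im) = gT N im \<otimes>\<^bsub>Hecke N\<^esub> gT N (im + 1) \<otimes>\<^bsub>Hecke N\<^esub> inv\<^bsub>Hecke N\<^esub> (gT N im)"
    by (simp add: gT_def[of r] phi_cls hom_letter Fimg_def cls_mult ctf ctinv inv)
  have c: "phi (gT r i) = gT N (i + 1)" if "im + 1 \<le> i" "i \<le> int r" for i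
  proof -
    have u: "(i - im) mod int r = i - im" using that r by (intro mod_pos_pos_trivial) auto
    show ?thesis using that r by (simp add: gT_def[of r] phi_cls hom_letter Fimg_def u ctf)
  qed
  have d: "phi (gRho r) = inv\<^bsub>Hecke N\<^esub> (gT N (im + 1)) \<otimes>\<^bsub>Hecke N\<^esub> gRho N"
    by (simp add: gRho_def phi_cls hom_letter Fimg_def cls_mult ctinv inv)
  have e: "phi (gRhoInv r) = gRhoInv N \<otimes>\<^bsub>Hecke N\<^esub> gT N (im + 1)"
    by (simp add: gRhoInv_def phi_cls hom_letter Fimg_def cls_mult ctf)
  have "phi \<in> hecke_alg_hom r N" using hom scal by (simp add: hecke_alg_hom_def)
  then show ?thesis unfolding eqN using inj a b c d e by blast
qed

end
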